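(* Let $\mathcal{M}\in\mathcal{K}(2^{\mathbb{N}})$ contain every three-element subset of $\mathbb{N}$. Then $e_1,e_2,\dots$ is a shrinking basis of $T^*[\mathcal{M},\frac12]$. In particular, if moreover every element of $\mathcal{M}$ is a finite set, then $T^*[\mathcal{M},\frac12]$ is reflexive.
   Context: Elements of $2^{\mathbb{N}}$ are identified with subsets of $\mathbb{N}$; $\mathcal{K}(2^{\mathbb{N}})$ is the space of compact subsets of $2^{\mathbb{N}}$. Let $e_n=\mathbf{1}_{\{n\}}$ be the canonical basis of $c_{00}$, and for $E\subset\mathbb{N}$, $x\in c_{00}$ let $Ex=\mathbf{1}_E\cdot x$. A family $\{E_1,\dots,E_n\}$ of successive finite subsets of $\mathbb{N}$ is $\mathcal{M}$-admissible if some element of $\mathcal{M}$ contains numbers $m_1,\dots,m_n$ with $m_1\le E_1<m_2\le E_2<\dots<m_n\le E_n$. $\Theta_{\mathcal{M}}$ is the smallest absolutely convex subset of $c_{00}$ containing all $e_i$ and closed under: $\{E_1,\dots,E_n\}$ $\mathcal{M}$-admissible and $x_1,\dots,x_n\in\Theta_{\mathcal{M}}$ imply $\frac12\sum_k E_kx_k\in\Theta_{\mathcal{M}}$. $\|\cdot\|_{\mathcal{M}}$ is the Minkowski gauge of $\Theta_{\mathcal{M}}$ and $T^*[\mathcal{M},\frac12]$ is the completion of $(c_{00},\|\cdot\|_{\mathcal{M}})$; $(e_n)$ is a basis of it. A basis $(x_i)$ of $X$ is shrinking if the dual basic functionals span a dense subspace of $X^*$. *)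

theory Defs
  imports "HOL-Analysis.Analysis"
begin

text \<open>Conventions: the natural numbers are indexed from 0 (an order-preserving
reindexing of the paper's N = {1,2,...}); vectors are functions nat => real with
pointwise operations; c00 are the finitely supported ones; subsets of N are
identified with points of 2^N = {0,1}^N via their indicator functions, where
nat => real carries the product topology.\<close>

definition c00 :: "(nat \<Rightarrow> real) set" where
  "c00 = {x. finite {n. x n \<noteq> 0}}"

definition unitvec :: "nat \<Rightarrow> nat \<Rightarrow> real" where
  "unitvec i = indicator {i}"

definition restr :: "nat set \<Rightarrow> (nat \<Rightarrow> real) \<Rightarrow> nat \<Rightarrow> real" where
  "restr E x = (\<lambda>n. indicator E n * x n)"

definition admissible :: "nat set set \<Rightarrow> nat set list \<Rightarrow> bool" where
  "admissible M Es \<longleftrightarrow>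
     (\<forall>k<length Es. finite (Es!k) \<and> Es!k \<noteq> {}) \<and>
     (\<forall>k. Suc k < length Es \<longrightarrow> (\<forall>a\<in>Es!k. \<forall>b\<in>Es!Suc k. a < b)) \<and>
     (\<exists>F\<in>M. \<exists>ms::nat list. length ms = length Es \<and> set ms \<subseteq> F \<and>
        (\<forall>k<length Es. \<forall>j\<in>Es!k. ms!k \<le> j) \<and>
        (\<forall>k. Suc k < length Es \<longrightarrow> (\<forall>j\<in>Es!k. j < ms!Suc k)))"

definition absolutely_convex :: "(nat \<Rightarrow> real) set \<Rightarrow> bool" where
  "absolutely_convex S \<longleftrightarrow>
     (\<forall>x\<in>S. \<forall>y\<in>S. \<forall>a b. \<bar>a\<bar> + \<bar>b\<bar> \<le> 1 \<longrightarrow> (\<lambda>n. a * x n + b * y n) \<in> S)"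

definition closed_under_adm :: "nat set set \<Rightarrow> (nat \<Rightarrow> real) set \<Rightarrow> bool" where
  "closed_under_adm M S \<longleftrightarrow>
     (\<forall>Es xs. admissible M Es \<longrightarrow> length xs = length Es \<longrightarrow> set xs \<subseteq> S \<longrightarrow>
        (\<lambda>n. (1/2) * (\<Sum>k<length Es. restr (Es!k) (xs!k) n)) \<in> S)"

definition Theta :: "nat set set \<Rightarrow> (nat \<Rightarrow> real) set" where
  "Theta M = \<Inter>{S. S \<subseteq> c00 \<and> absolutely_convex S \<and> (\<forall>i. unitvec i \<in> S) \<and>
                      closed_under_adm M S}"

definition normM :: "nat set set \<Rightarrow> (nat \<Rightarrow> real) \<Rightarrow> real" where
  "normM M x = Inf {t. t > 0 \<and> (\<exists>y\<in>Theta M. x = (\<lambda>n. t * y n))}"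

text \<open>The dual of T*[M,1/2] (the completion of (c00, normM M)) is identified
isometrically with the bounded linear functionals on (c00, normM M); we represent
them as functions vanishing outside c00.\<close>
definition dual_space :: "nat set set \<Rightarrow> ((nat \<Rightarrow> real) \<Rightarrow> real) set" where
  "dual_space M = {f.
     (\<forall>x\<in>c00. \<forall>y\<in>c00. \<forall>a b. f (\<lambda>n. a * x n + b * y n) = a * f x + b * f y) \<and>
     (\<exists>C. \<forall>x\<in>c00. \<bar>f x\<bar> \<le> C * normM M x) \<and>
     (\<forall>x. x \<notin> c00 \<longrightarrow> f x = 0)}"

definition dual_norm :: "nat set set \<Rightarrow> ((nat \<Rightarrow> real) \<Rightarrow> real) \<Rightarrow> real" where
  "dual_norm M f = Sup {\<bar>f x\<bar> | x. x \<in> c00 \<and> normM M x \<le> 1}"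

definition proj :: "nat \<Rightarrow> (nat \<Rightarrow> real) \<Rightarrow> nat \<Rightarrow> real" where
  "proj N x = (\<lambda>n. if n < N then x n else 0)"

text \<open>(e_n) is a (Schauder) basis of the completion: since span{e_n} = c00 is dense
and each e_n is nonzero, this is equivalent to uniform boundedness of the partial sum
projections on c00 (Banach--Grunblum criterion).\<close>
definition is_basis :: "nat set set \<Rightarrow> bool" where
  "is_basis M \<longleftrightarrow> (\<exists>K. \<forall>N. \<forall>x\<in>c00. normM M (proj N x) \<le> K * normM M x)"

text \<open>Shrinking: the biorthogonal functionals e_n^* (x |-> x n) span a norm-dense
subspace of the dual.\<close>
definition shrinking :: "nat set set \<Rightarrow> bool" where
  "shrinking M \<longleftrightarrow>
     (\<forall>f\<in>dual_space M. \<forall>\<epsilon>>0. \<exists>N. \<exists>c::nat \<Rightarrow> real.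
        dual_norm M (\<lambda>x. if x \<in> c00 then f x - (\<Sum>i<N. c i * x i) else 0) < \<epsilon>)"

definition shrinking_basis :: "nat set set \<Rightarrow> bool" where
  "shrinking_basis M \<longleftrightarrow> is_basis M \<and> shrinking M"

text \<open>Reflexivity of the completion X: every bounded linear functional Phi on X^*
is evaluation at some x in X; an element x of X is represented by a normM-Cauchy
sequence (y_k) in c00, and evaluation at it is f |-> lim f(y_k).\<close>
definition reflexive_space :: "nat set set \<Rightarrow> bool" where
  "reflexive_space M \<longleftrightarrow>
     (\<forall>\<Phi> :: ((nat \<Rightarrow> real) \<Rightarrow> real) \<Rightarrow> real.
        (\<forall>f\<in>dual_space M. \<forall>g\<in>dual_space M. \<forall>a b.
            \<Phi> (\<lambda>x. a * f x + b * g x) = a * \<Phi> f + b * \<Phi> g) \<longrightarrow>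
        (\<exists>C. \<forall>f\<in>dual_space M. \<bar>\<Phi> f\<bar> \<le> C * dual_norm M f) \<longrightarrow>
        (\<exists>y :: nat \<Rightarrow> nat \<Rightarrow> real. (\<forall>k. y k \<in> c00) \<and>
           (\<forall>\<epsilon>>0. \<exists>K. \<forall>m\<ge>K. \<forall>n\<ge>K. normM M (\<lambda>i. y m i - y n i) < \<epsilon>) \<and>
           (\<forall>f\<in>dual_space M. (\<lambda>k. f (y k)) \<longlonglongrightarrow> \<Phi> f)))"

end

theory Submission
  imports Defs
begin


lemma Theta_sub: "Theta M \<subseteq> S" if "S \<subseteq> c00" "absolutely_convex S" "\<forall>i. unitvec i \<in> S" "closed_under_adm M S"
  using that unfolding Theta_def by blast

lemma c00_lin: "x \<in> c00 \<Longrightarrow> y \<in> c00 \<Longrightarrow> (\<lambda>n. a * x n + b * y n) \<in> c00"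
proof -
  assume "x \<in> c00" "y \<in> c00"
  then have "finite ({n. x n \<noteq> 0} \<union> {n. y n \<noteq> 0})" by (simp add: c00_def)
  moreover have "{n. a * x n + b * y n \<noteq> 0} \<subseteq> {n. x n \<noteq> 0} \<union> {n. y n \<noteq> 0}" by auto
  ultimately show ?thesis unfolding c00_def by (auto intro: finite_subset)
qed

lemma unitvec_c00: "unitvec i \<in> c00"
proof -
  have "{n. unitvec i n \<noteq> 0} \<subseteq> {i}" by (auto simp: unitvec_def split: split_indicator_asm)
  then show ?thesis unfolding c00_def by (auto intro: finite_subset)
qed

lemma restr_c00: "x \<in> c00 \<Longrightarrow> restr E x \<in> c00"
  unfolding c00_def restr_def by (auto elim: rev_finite_subset)

lemma sum_c00: "finite K \<Longrightarrow> (\<forall>k\<in>K. f k \<in> c00) \<Longrightarrow> (\<lambda>n. \<Sum>k\<in>K. f k n) \<in> c00"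
proof (induction K rule: finite_induct)
  case empty then show ?case by (simp add: c00_def)
next
  case (insert k K)
  then have "(\<lambda>n. 1 * f k n + 1 * (\<Sum>k\<in>K. f k n)) \<in> c00" by (intro c00_lin) auto
  then show ?case using insert by simp
qed

lemma c00_closed: "closed_under_adm M c00"
  unfolding closed_under_adm_def
proof (intro allI impI)
  fix Es xs assume "admissible M Es" "length xs = length Es" "set xs \<subseteq> c00"
  then have "\<forall>k\<in>{..<length Es}. restr (Es!k) (xs!k) \<in> c00"
    by (auto intro!: restr_c00 nth_mem)
  then have "(\<lambda>n. \<Sum>k<length Es. restr (Es!k) (xs!k) n) \<in> c00" by (intro sum_c00) auto
  then have "(\<lambda>n. (1/2) * (\<Sum>k<length Es. restr (Es!k) (xs!k) n) + 0 * (\<Sum>k<length Es. restr (Es!k) (xs!k) n)) \<in> c00"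
    by (intro c00_lin)
  then show "(\<lambda>n. 1 / 2 * (\<Sum>k<length Es. restr (Es ! k) (xs ! k) n)) \<in> c00" by simp
qed

lemma c00_ac: "absolutely_convex c00"
  unfolding absolutely_convex_def by (auto intro: c00_lin)

lemma Theta_props: "Theta M \<subseteq> c00" "absolutely_convex (Theta M)" "unitvec i \<in> Theta M" "closed_under_adm M (Theta M)"
proof -
  let ?F = "{S. S \<subseteq> c00 \<and> absolutely_convex S \<and> (\<forall>i. unitvec i \<in> S) \<and> closed_under_adm M S}"
  have c: "c00 \<in> ?F" using c00_ac c00_closed unitvec_c00 by auto
  show "Theta M \<subseteq> c00" unfolding Theta_def using c by blast
  show "unitvec i \<in> Theta M" unfolding Theta_def by blast
  show "absolutely_convex (Theta M)" unfolding absolutely_convex_def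
  proof (intro ballI allI impI)
    fix x y a b assume xy: "x \<in> Theta M" "y \<in> Theta M" and ab: "\<bar>a\<bar> + \<bar>b\<bar> \<le> (1::real)"
    show "(\<lambda>n. a * x n + b * y n) \<in> Theta M" unfolding Theta_def
    proof
      fix S assume "S \<in> ?F"
      then have "absolutely_convex S" "x \<in> S" "y \<in> S" using xy unfolding Theta_def by auto
      then show "(\<lambda>n. a * x n + b * y n) \<in> S" using ab unfolding absolutely_convex_def by blast
    qed
  qed
  show "closed_under_adm M (Theta M)" unfolding closed_under_adm_def
  proof (intro allI impI)
    fix Es xs assume a: "admissible M Es" "length xs = length Es" "set xs \<subseteq> Theta M"
    show "(\<lambda>n. 1 / 2 * (\<Sum>k<length Es. restr (Es ! k) (xs ! k) n)) \<in> Theta M" unfolding Theta_def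
    proof (rule InterI)
      fix S assume S: "S \<in> ?F"
      then have "Theta M \<subseteq> S" unfolding Theta_def by blast
      then have "closed_under_adm M S" "set xs \<subseteq> S" using a S by auto
      then show "(\<lambda>n. 1 / 2 * (\<Sum>k<length Es. restr (Es ! k) (xs ! k) n)) \<in> S"
        using a unfolding closed_under_adm_def by blast
    qed
  qed
qed

lemma Theta_c00: "x \<in> Theta M \<Longrightarrow> x \<in> c00" using Theta_props(1) by blast

lemma Theta_lin: "x \<in> Theta M \<Longrightarrow> y \<in> Theta M \<Longrightarrow> \<bar>a\<bar> + \<bar>b\<bar> \<le> 1 \<Longrightarrow> (\<lambda>n. a * x n + b * y n) \<in> Theta M"
  using Theta_props(2) unfolding absolutely_convex_def by blast

lemma Theta_adm: "admissible M Es \<Longrightarrow> length xs = length Es \<Longrightarrow> set xs \<subseteq> Theta M \<Longrightarrow>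
   (\<lambda>n. (1/2) * (\<Sum>k<length Es. restr (Es!k) (xs!k) n)) \<in> Theta M"
  using Theta_props(4) unfolding closed_under_adm_def by blast

lemma Theta_zero: "(\<lambda>n. 0) \<in> Theta M"
  using Theta_lin[of "unitvec 0" M "unitvec 0" 0 0] Theta_props(3) by simp

lemma Theta_scale: "x \<in> Theta M \<Longrightarrow> \<bar>a\<bar> \<le> 1 \<Longrightarrow> (\<lambda>n. a * x n) \<in> Theta M"
  using Theta_lin[of x M x a 0] by simp

lemma Theta_neg: "x \<in> Theta M \<Longrightarrow> (\<lambda>n. - x n) \<in> Theta M"
  using Theta_scale[of x M "-1"] by simp

lemma Theta_induct[consumes 1, case_names unit lin adm]:
  assumes "z \<in> Theta M" and "\<And>i. P (unitvec i)"
    and "\<And>x y a b. x \<in> Theta M \<Longrightarrow> y \<in> Theta M \<Longrightarrow> P x \<Longrightarrow> P y \<Longrightarrow> \<bar>a\<bar> + \<bar>b\<bar> \<le> 1 \<Longrightarrow> P (\<lambda>n. a * x n + b * y n)"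
    and "\<And>Es xs. admissible M Es \<Longrightarrow> length xs = length Es \<Longrightarrow> set xs \<subseteq> Theta M \<Longrightarrow> (\<forall>x\<in>set xs. P x) \<Longrightarrow>
          P (\<lambda>n. (1/2) * (\<Sum>k<length Es. restr (Es!k) (xs!k) n))"
  shows "P z"
proof -
  let ?S = "{x \<in> Theta M. P x}"
  have "Theta M \<subseteq> ?S"
  proof (rule Theta_sub)
    show "?S \<subseteq> c00" using Theta_props(1) by auto
    show "absolutely_convex ?S" unfolding absolutely_convex_def using assms(3) Theta_lin by auto
    show "\<forall>i. unitvec i \<in> ?S" using assms(2) Theta_props(3) by auto
    show "closed_under_adm M ?S" unfolding closed_under_adm_def
    proof (intro allI impI)
      fix Es xs assume a: "admissible M Es" "length xs = length Es" "set xs \<subseteq> ?S"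
      then show "(\<lambda>n. 1 / 2 * (\<Sum>k<length Es. restr (Es ! k) (xs ! k) n)) \<in> ?S"
        using Theta_adm[of M Es xs] assms(4)[of Es xs] by auto
    qed
  qed
  then show ?thesis using assms(1) by auto
qed

lemma restr_restr: "restr E (restr F x) = restr F (restr E x)"
  unfolding restr_def by (auto simp: fun_eq_iff)

lemma Theta_restr: "x \<in> Theta M \<Longrightarrow> restr E x \<in> Theta M"
proof (induction x rule: Theta_induct)
  case (unit i)
  show ?case
  proof (cases "i \<in> E")
    case True
    then have "restr E (unitvec i) = unitvec i" unfolding restr_def unitvec_def by (auto simp: fun_eq_iff indicator_def)
    then show ?thesis using Theta_props(3) by simp
  next
    case False
    then have "restr E (unitvec i) = (\<lambda>n. 0)" unfolding restr_def unitvec_def by (auto simp: fun_eq_iff indicator_def)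
    then show ?thesis using Theta_zero by simp
  qed
next
  case (lin x y a b)
  have "restr E (\<lambda>n. a * x n + b * y n) = (\<lambda>n. a * restr E x n + b * restr E y n)"
    unfolding restr_def by (auto simp: fun_eq_iff algebra_simps)
  then show ?case using lin Theta_lin by simp
next
  case (adm Es xs)
  let ?ys = "map (restr E) xs"
  have "(\<lambda>n. (1/2) * (\<Sum>k<length Es. restr (Es!k) (?ys!k) n)) \<in> Theta M"
    using adm by (intro Theta_adm) auto
  moreover have "restr E (\<lambda>n. (1/2) * (\<Sum>k<length Es. restr (Es!k) (xs!k) n)) = (\<lambda>n. (1/2) * (\<Sum>k<length Es. restr (Es!k) (?ys!k) n))"
  proof (rule ext)
    fix n
    have "\<And>k. k \<in> {..<length Es} \<Longrightarrow> restr (Es!k) (?ys!k) n = indicator E n * restr (Es!k) (xs!k) n"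
    proof -
      fix k assume "k \<in> {..<length Es}"
      then have "?ys!k = restr E (xs!k)" using adm(2) by simp
      then show "restr (Es!k) (?ys!k) n = indicator E n * restr (Es!k) (xs!k) n"
        by (simp only: restr_def mult.left_commute)
    qed
    then have "(\<Sum>k<length Es. restr (Es!k) (?ys!k) n) = (\<Sum>k<length Es. indicator E n * restr (Es!k) (xs!k) n)"
      by (rule sum.cong[OF refl])
    also have "\<dots> = indicator E n * (\<Sum>k<length Es. restr (Es!k) (xs!k) n)"
      by (rule sum_distrib_left[symmetric])
    finally have "(\<Sum>k<length Es. restr (Es!k) (?ys!k) n) = indicator E n * (\<Sum>k<length Es. restr (Es!k) (xs!k) n)" .
    then show "restr E (\<lambda>n. (1/2) * (\<Sum>k<length Es. restr (Es!k) (xs!k) n)) n = (1/2) * (\<Sum>k<length Es. restr (Es!k) (?ys!k) n)"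
      by (simp only: restr_def mult.left_commute)
  qed
  ultimately show ?case by simp
qed


lemma adm_succ: "admissible M Es \<Longrightarrow> Suc k < length Es \<Longrightarrow> a \<in> Es!k \<Longrightarrow> b \<in> Es!Suc k \<Longrightarrow> a < b"
  unfolding admissible_def by blast

lemma adm_ne: "admissible M Es \<Longrightarrow> k < length Es \<Longrightarrow> Es!k \<noteq> {} \<and> finite (Es!k)"
  unfolding admissible_def by blast

lemma adm_less:
  assumes "admissible M Es" "i < j" "j < length Es" "a \<in> Es!i" "b \<in> Es!j"
  shows "a < b"
  using assms(2-5)
proof (induction j arbitrary: b)
  case 0 then show ?case by simp
next
  case (Suc j)
  have ne: "Es!j \<noteq> {}" using adm_ne[OF assms(1), of j] Suc.prems by auto
  then obtain c where c: "c \<in> Es!j" by auto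
  have cb: "c < b" using adm_succ[OF assms(1)] Suc.prems c by blast
  show ?case
  proof (cases "i = j")
    case True then show ?thesis using adm_succ[OF assms(1)] Suc.prems by blast
  next
    case False
    then have "a < c" using Suc.IH[of c] Suc.prems c by auto
    then show ?thesis using cb by simp
  qed
qed

lemma adm_unique:
  assumes "admissible M Es" "k < length Es" "k' < length Es" "n \<in> Es!k" "n \<in> Es!k'"
  shows "k = k'"
  using adm_less[OF assms(1), of k k' n n] adm_less[OF assms(1), of k' k n n] assms
  by (metis less_irrefl nat_neq_iff)

lemma adm_sum_single:
  assumes "admissible M Es" "length xs = length Es"
  shows "(\<Sum>k<length Es. restr (Es!k) (xs!k) n) = 0 \<or>
    (\<exists>k<length Es. n \<in> Es!k \<and> (\<Sum>k<length Es. restr (Es!k) (xs!k) n) = (xs!k) n)"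
proof (cases "\<exists>k<length Es. n \<in> Es!k")
  case False
  then have "\<forall>k\<in>{..<length Es}. restr (Es!k) (xs!k) n = 0" by (auto simp: restr_def)
  then show ?thesis by simp
next
  case True
  then obtain k where k: "k < length Es" "n \<in> Es!k" by auto
  have "\<forall>j\<in>{..<length Es} - {k}. restr (Es!j) (xs!j) n = 0"
    using adm_unique[OF assms(1) k(1) _ k(2)] by (auto simp: restr_def indicator_def)
  then have "(\<Sum>j<length Es. restr (Es!j) (xs!j) n) = restr (Es!k) (xs!k) n"
    using k(1) by (subst sum.remove[of _ k]) auto
  then show ?thesis using k by (auto simp: restr_def)
qed

lemma Theta_sup: "x \<in> Theta M \<Longrightarrow> \<bar>x n\<bar> \<le> 1"
proof (induction x rule: Theta_induct)
  case (unit i) then show ?case by (simp add: unitvec_def indicator_def)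
next
  case (lin x y a b)
  have "\<bar>a * x n + b * y n\<bar> \<le> \<bar>a\<bar> * \<bar>x n\<bar> + \<bar>b\<bar> * \<bar>y n\<bar>"
    by (metis abs_mult abs_triangle_ineq)
  also have "\<dots> \<le> \<bar>a\<bar> * 1 + \<bar>b\<bar> * 1"
    using lin by (intro add_mono mult_left_mono) auto
  finally show ?case using lin by simp
next
  case (adm Es xs)
  from adm_sum_single[OF adm(1,2), of n] show ?case
  proof
    assume "(\<Sum>k<length Es. restr (Es!k) (xs!k) n) = 0" then show ?thesis by simp
  next
    assume "\<exists>k<length Es. n \<in> Es!k \<and> (\<Sum>k<length Es. restr (Es!k) (xs!k) n) = (xs!k) n"
    then obtain k where "k < length Es" "(\<Sum>k<length Es. restr (Es!k) (xs!k) n) = (xs!k) n" by auto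
    moreover have "\<bar>(xs!k) n\<bar> \<le> 1" using adm(4) \<open>k < length Es\<close> adm(2) by auto
    ultimately show ?thesis by simp
  qed
qed

definition GS :: "nat set set \<Rightarrow> (nat \<Rightarrow> real) \<Rightarrow> real set" where
  "GS M x = {t. t > 0 \<and> (\<exists>y\<in>Theta M. x = (\<lambda>n. t * y n))}"

lemma normM_GS: "normM M x = Inf (GS M x)" unfolding normM_def GS_def by simp

lemma GS_bdd: "bdd_below (GS M x)" unfolding GS_def by (auto intro: bdd_belowI[of _ 0])

lemma GS_iff: "t > 0 \<Longrightarrow> t \<in> GS M x \<longleftrightarrow> (\<lambda>n. x n / t) \<in> Theta M"
proof -
  assume t: "t > 0"
  show ?thesis
  proof
    assume "t \<in> GS M x"
    then obtain y where "y \<in> Theta M" "x = (\<lambda>n. t * y n)" unfolding GS_def by auto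
    moreover then have "(\<lambda>n. x n / t) = y" using t by auto
    ultimately show "(\<lambda>n. x n / t) \<in> Theta M" by simp
  next
    assume "(\<lambda>n. x n / t) \<in> Theta M"
    moreover have "x = (\<lambda>n. t * (x n / t))" using t by auto
    ultimately show "t \<in> GS M x" unfolding GS_def using t by (intro CollectI conjI bexI[of _ "(\<lambda>n. x n / t)"])
  qed
qed

lemma normM_le: "t > 0 \<Longrightarrow> (\<lambda>n. x n / t) \<in> Theta M \<Longrightarrow> normM M x \<le> t"
proof -
  assume "t > 0" "(\<lambda>n. x n / t) \<in> Theta M"
  then have "t \<in> GS M x" using GS_iff by blast
  then show ?thesis by (simp add: normM_GS cInf_lower GS_bdd)
qed

lemma Theta_sum_div:
  assumes "t > 0" "s > 0" "(\<lambda>n. x n / t) \<in> Theta M" "(\<lambda>n. y n / s) \<in> Theta M"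
  shows "(\<lambda>n. (x n + y n) / (t + s)) \<in> Theta M"
proof -
  have "(\<lambda>n. (t/(t+s)) * (x n / t) + (s/(t+s)) * (y n / s)) \<in> Theta M"
    using assms by (intro Theta_lin) (auto simp: field_simps)
  moreover have "(\<lambda>n. (t/(t+s)) * (x n / t) + (s/(t+s)) * (y n / s)) = (\<lambda>n. (x n + y n) / (t + s))"
  proof
    fix n
    have "t + s > 0" using assms by simp
    have "(t/(t+s)) * (x n / t) = x n / (t+s)" "(s/(t+s)) * (y n / s) = y n / (t+s)"
      using assms(1,2) by (simp_all add: field_simps)
    then show "(t/(t+s)) * (x n / t) + (s/(t+s)) * (y n / s) = (x n + y n) / (t + s)"
      by (simp add: add_divide_distrib)
  qed
  ultimately show ?thesis by simp
qed

lemma GS_ne: "x \<in> c00 \<Longrightarrow> \<exists>t>0. (\<lambda>n. x n / t) \<in> Theta M"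
proof -
  have "\<forall>x. {n. x n \<noteq> 0} \<subseteq> S \<longrightarrow> (\<exists>t>0. (\<lambda>n. x n / t) \<in> Theta M)" if "finite S" for S
    using that
  proof (induction S rule: finite_induct)
    case empty
    show ?case
    proof (intro allI impI)
      fix x :: "nat \<Rightarrow> real" assume "{n. x n \<noteq> 0} \<subseteq> {}"
      then have "(\<lambda>n. x n / 1) = (\<lambda>n. 0)" by auto
      then show "\<exists>t>0. (\<lambda>n. x n / t) \<in> Theta M" using Theta_zero by (intro exI[of _ 1]) auto
    qed
  next
    case (insert p S)
    show ?case
    proof (intro allI impI)
      fix x :: "nat \<Rightarrow> real" assume x: "{n. x n \<noteq> 0} \<subseteq> insert p S"
      define x' where "x' = (\<lambda>n. if n = p then 0 else x n)"
      define w where "w = (\<lambda>n. x p * unitvec p n)"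
      have "{n. x' n \<noteq> 0} \<subseteq> S" using x unfolding x'_def by auto
      then obtain t where t: "t > 0" "(\<lambda>n. x' n / t) \<in> Theta M" using insert.IH by blast
      define s where "s = \<bar>x p\<bar> + 1"
      have s: "s > 0" unfolding s_def by simp
      have "(\<lambda>n. (x p / s) * unitvec p n) \<in> Theta M"
        using s by (intro Theta_scale Theta_props(3)) (auto simp: s_def)
      moreover have "(\<lambda>n. (x p / s) * unitvec p n) = (\<lambda>n. w n / s)" unfolding w_def by auto
      ultimately have "(\<lambda>n. w n / s) \<in> Theta M" by simp
      then have "(\<lambda>n. (x' n + w n) / (t + s)) \<in> Theta M" using Theta_sum_div t s by blast
      moreover have "(\<lambda>n. x' n + w n) = x" unfolding x'_def w_def unitvec_def by (auto simp: fun_eq_iff)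
      ultimately show "\<exists>t>0. (\<lambda>n. x n / t) \<in> Theta M" using t s
        by (intro exI[of _ "t+s"]) (auto simp: fun_eq_iff)
    qed
  qed
  then show "x \<in> c00 \<Longrightarrow> ?thesis" unfolding c00_def by blast
qed

lemma GS_nonempty: "x \<in> c00 \<Longrightarrow> GS M x \<noteq> {}"
  using GS_ne[of x M] GS_iff by blast

lemma normM_nonneg: "x \<in> c00 \<Longrightarrow> 0 \<le> normM M x"
  unfolding normM_GS using GS_nonempty by (intro cInf_greatest) (auto simp: GS_def)

lemma normM_lt: "x \<in> c00 \<Longrightarrow> normM M x < t \<Longrightarrow> (\<lambda>n. x n / t) \<in> Theta M"
proof -
  assume x: "x \<in> c00" and "normM M x < t"
  then obtain s where s: "s \<in> GS M x" "s < t" unfolding normM_GS using GS_nonempty[OF x] cInf_lessD by metis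
  then have s0: "s > 0" unfolding GS_def by auto
  then have y: "(\<lambda>n. x n / s) \<in> Theta M" using s GS_iff by blast
  have "(\<lambda>n. (s / t) * (x n / s)) \<in> Theta M" using s s0 by (intro Theta_scale[OF y]) auto
  moreover have "(\<lambda>n. (s / t) * (x n / s)) = (\<lambda>n. x n / t)" using s0 by auto
  ultimately show ?thesis by simp
qed

lemma normM_leI:
  assumes "x \<in> c00" "r \<ge> 0" "\<And>t. t > r \<Longrightarrow> (\<lambda>n. x n / t) \<in> Theta M"
  shows "normM M x \<le> r"
proof (rule field_le_epsilon)
  fix e :: real assume "e > 0"
  then show "normM M x \<le> r + e" using assms by (intro normM_le) auto
qed

lemma normM_Theta: "x \<in> Theta M \<Longrightarrow> normM M x \<le> 1"
  using normM_le[of 1 x M] by simp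

lemma normM_zero: "normM M (\<lambda>n. 0) = 0"
proof -
  have "normM M (\<lambda>n. 0) \<le> 0"
    by (rule normM_leI) (auto simp: c00_def Theta_zero)
  moreover have "(\<lambda>n. 0::real) \<in> c00" by (simp add: c00_def)
  ultimately show ?thesis using normM_nonneg by (metis antisym)
qed

lemma normM_triangle:
  assumes "x \<in> c00" "y \<in> c00"
  shows "normM M (\<lambda>n. x n + y n) \<le> normM M x + normM M y"
proof (rule field_le_epsilon)
  fix e :: real assume e: "e > 0"
  let ?t = "normM M x + e/2" and ?s = "normM M y + e/2"
  have t: "?t > 0" "?s > 0" using normM_nonneg assms e by (auto intro: add_nonneg_pos)
  have "(\<lambda>n. x n / ?t) \<in> Theta M" "(\<lambda>n. y n / ?s) \<in> Theta M"
    using assms e by (auto intro!: normM_lt)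
  then have "(\<lambda>n. (x n + y n) / (?t + ?s)) \<in> Theta M" using Theta_sum_div t by blast
  then have "normM M (\<lambda>n. x n + y n) \<le> ?t + ?s" using t by (intro normM_le) auto
  then show "normM M (\<lambda>n. x n + y n) \<le> normM M x + normM M y + e" by simp
qed

lemma normM_scale:
  assumes "x \<in> c00"
  shows "normM M (\<lambda>n. c * x n) \<le> \<bar>c\<bar> * normM M x"
proof (rule normM_leI)
  show "(\<lambda>n. c * x n) \<in> c00" using c00_lin[OF assms assms, of c 0] by simp
  show "0 \<le> \<bar>c\<bar> * normM M x" using normM_nonneg[OF assms] by simp
  fix t assume t: "\<bar>c\<bar> * normM M x < t"
  show "(\<lambda>n. c * x n / t) \<in> Theta M"
  proof (cases "c = 0")
    case True then show ?thesis using Theta_zero by simp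
  next
    case False
    then have "normM M x < t / \<bar>c\<bar>" using t by (simp add: field_simps)
    then have y: "(\<lambda>n. x n / (t / \<bar>c\<bar>)) \<in> Theta M" using normM_lt assms by blast
    have "(\<lambda>n. sgn c * (x n / (t / \<bar>c\<bar>))) \<in> Theta M" by (rule Theta_scale[OF y]) (simp add: abs_sgn)
    moreover have "(\<lambda>n. sgn c * (x n / (t / \<bar>c\<bar>))) = (\<lambda>n. c * x n / t)"
      using False by (auto simp: fun_eq_iff sgn_if field_simps)
    ultimately show ?thesis by simp
  qed
qed

lemma normM_neg: "x \<in> c00 \<Longrightarrow> normM M (\<lambda>n. - x n) = normM M x"
proof -
  assume x: "x \<in> c00"
  have "normM M (\<lambda>n. (-1) * x n) \<le> normM M x" using normM_scale[OF x, of M "-1"] by simp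
  moreover have "(\<lambda>n. - x n) \<in> c00" using c00_lin[OF x x, of "-1" 0] by simp
  then have "normM M (\<lambda>n. (-1) * (- x n)) \<le> normM M (\<lambda>n. - x n)" using normM_scale[of "\<lambda>n. - x n" M "-1"] by simp
  ultimately show ?thesis by simp
qed

lemma normM_diff:
  assumes "x \<in> c00" "y \<in> c00"
  shows "normM M (\<lambda>n. x n - y n) \<le> normM M x + normM M y"
proof -
  have "(\<lambda>n. - y n) \<in> c00" using c00_lin[OF assms(2) assms(2), of "-1" 0] by simp
  then have "normM M (\<lambda>n. x n + - y n) \<le> normM M x + normM M (\<lambda>n. - y n)" using normM_triangle assms by blast
  then show ?thesis using normM_neg[OF assms(2)] by simp
qed

lemma normM_sup: "x \<in> c00 \<Longrightarrow> \<bar>x n\<bar> \<le> normM M x"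
proof (rule field_le_epsilon)
  fix e :: real assume x: "x \<in> c00" and e: "e > 0"
  have t: "normM M x + e > 0" using normM_nonneg[OF x, of M] e by simp
  have "(\<lambda>n. x n / (normM M x + e)) \<in> Theta M" using normM_lt x e by simp
  then have h: "\<bar>x n / (normM M x + e)\<bar> \<le> 1" by (rule Theta_sup)
  have a: "\<bar>normM M x + e\<bar> = normM M x + e" using t by simp
  have "\<bar>x n\<bar> / (normM M x + e) \<le> 1" using h by (simp only: abs_divide a)
  then show "\<bar>x n\<bar> \<le> normM M x + e" using t by (simp add: pos_divide_le_eq)
qed

lemma normM_restr: assumes x: "x \<in> c00" shows "normM M (restr E x) \<le> normM M x"
proof (rule normM_leI)
  show "restr E x \<in> c00" using restr_c00[OF x] .
  show "0 \<le> normM M x" using normM_nonneg[OF x] .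
  fix t assume "normM M x < t"
  then have "restr E (\<lambda>n. x n / t) \<in> Theta M" using normM_lt[OF x] Theta_restr by blast
  moreover have "restr E (\<lambda>n. x n / t) = (\<lambda>n. restr E x n / t)" unfolding restr_def by auto
  ultimately show "(\<lambda>n. restr E x n / t) \<in> Theta M" by simp
qed


lemma dual_lin: "f \<in> dual_space M \<Longrightarrow> x \<in> c00 \<Longrightarrow> y \<in> c00 \<Longrightarrow> f (\<lambda>n. a * x n + b * y n) = a * f x + b * f y"
  unfolding dual_space_def by blast

lemma dual_out: "f \<in> dual_space M \<Longrightarrow> x \<notin> c00 \<Longrightarrow> f x = 0"
  unfolding dual_space_def by blast

lemma dual_bound: "f \<in> dual_space M \<Longrightarrow> \<exists>C\<ge>0. \<forall>x\<in>c00. \<bar>f x\<bar> \<le> C * normM M x"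
proof -
  assume f: "f \<in> dual_space M"
  then obtain C where C: "\<forall>x\<in>c00. \<bar>f x\<bar> \<le> C * normM M x" unfolding dual_space_def by blast
  have "\<forall>x\<in>c00. \<bar>f x\<bar> \<le> max C 0 * normM M x"
  proof
    fix x assume x: "x \<in> c00"
    have "C * normM M x \<le> max C 0 * normM M x" using normM_nonneg[OF x, of M] by (intro mult_right_mono) auto
    then show "\<bar>f x\<bar> \<le> max C 0 * normM M x" using C x by force
  qed
  then show ?thesis by (intro exI[of _ "max C 0"]) auto
qed

lemma zero_c00: "(\<lambda>n. 0::real) \<in> c00" by (simp add: c00_def)

lemma dual_zero: "f \<in> dual_space M \<Longrightarrow> f (\<lambda>n. 0) = 0"
  using dual_lin[of f M "\<lambda>n. 0" "\<lambda>n. 0" 0 0] zero_c00 by simp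

lemma dual_scale: "f \<in> dual_space M \<Longrightarrow> x \<in> c00 \<Longrightarrow> f (\<lambda>n. a * x n) = a * f x"
  using dual_lin[of f M x x a 0] by simp

lemma dual_add: "f \<in> dual_space M \<Longrightarrow> x \<in> c00 \<Longrightarrow> y \<in> c00 \<Longrightarrow> f (\<lambda>n. x n + y n) = f x + f y"
  using dual_lin[of f M x y 1 1] by simp

lemma dual_sum: assumes f: "f \<in> dual_space M" and "finite I" "\<forall>i\<in>I. v i \<in> c00"
  shows "f (\<lambda>n. \<Sum>i\<in>I. v i n) = (\<Sum>i\<in>I. f (v i))"
  using assms(2,3)
proof (induction I rule: finite_induct)
  case empty then show ?case using dual_zero[OF f] by simp
next
  case (insert i I)
  have "(\<lambda>n. \<Sum>i\<in>I. v i n) \<in> c00" using insert sum_c00 by auto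
  then have "f (\<lambda>n. v i n + (\<Sum>i\<in>I. v i n)) = f (v i) + f (\<lambda>n. \<Sum>i\<in>I. v i n)"
    using insert dual_add[OF f, of "v i"] by auto
  then show ?case using insert by simp
qed

lemma dual_norm_bdd: "f \<in> dual_space M \<Longrightarrow> bdd_above {\<bar>f x\<bar> | x. x \<in> c00 \<and> normM M x \<le> 1}"
proof -
  assume f: "f \<in> dual_space M"
  obtain C where C: "C \<ge> 0" "\<forall>x\<in>c00. \<bar>f x\<bar> \<le> C * normM M x" using dual_bound[OF f] by blast
  have "\<forall>x\<in>c00. normM M x \<le> 1 \<longrightarrow> \<bar>f x\<bar> \<le> C"
  proof (intro ballI impI)
    fix x assume "x \<in> c00" "normM M x \<le> 1"
    then have "C * normM M x \<le> C * 1" using C by (intro mult_left_mono) auto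
    then show "\<bar>f x\<bar> \<le> C" using C \<open>x \<in> c00\<close> by force
  qed
  then show ?thesis by (intro bdd_aboveI[of _ C]) auto
qed

lemma dual_norm_ge: "f \<in> dual_space M \<Longrightarrow> x \<in> c00 \<Longrightarrow> normM M x \<le> 1 \<Longrightarrow> \<bar>f x\<bar> \<le> dual_norm M f"
  unfolding dual_norm_def using dual_norm_bdd by (intro cSup_upper) auto

lemma dual_norm_le: "(\<And>x. x \<in> c00 \<Longrightarrow> normM M x \<le> 1 \<Longrightarrow> \<bar>f x\<bar> \<le> r) \<Longrightarrow> dual_norm M f \<le> r"
  unfolding dual_norm_def
proof (rule cSup_least)
  show "{\<bar>f x\<bar> |x. x \<in> c00 \<and> normM M x \<le> 1} \<noteq> {}" using zero_c00 normM_zero by fastforce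
qed auto

lemma dual_norm_nonneg: "f \<in> dual_space M \<Longrightarrow> 0 \<le> dual_norm M f"
  using dual_norm_ge[of f M "\<lambda>n. 0"] zero_c00 normM_zero by force

lemma dual_norm_bound:
  assumes f: "f \<in> dual_space M" and x: "x \<in> c00"
  shows "\<bar>f x\<bar> \<le> dual_norm M f * normM M x"
proof (rule field_le_epsilon)
  fix e :: real assume e: "e > 0"
  define D where "D = dual_norm M f"
  have D: "D \<ge> 0" unfolding D_def using dual_norm_nonneg[OF f] .
  define t where "t = normM M x + e / (D + 1)"
  have ed: "e / (D + 1) > 0" using e D by simp
  have t: "t > 0" "normM M x < t" unfolding t_def using normM_nonneg[OF x, of M] ed by auto
  have xt: "(\<lambda>n. x n / t) \<in> Theta M" using normM_lt[OF x t(2)] .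
  have xt': "(\<lambda>n. (1/t) * x n) \<in> Theta M" using xt by (simp add: divide_inverse mult.commute)
  have "normM M (\<lambda>n. (1/t) * x n) \<le> 1" using normM_Theta[OF xt'] .
  moreover have "(\<lambda>n. (1/t) * x n) \<in> c00" using Theta_c00[OF xt'] .
  ultimately have "\<bar>f (\<lambda>n. (1/t) * x n)\<bar> \<le> D" unfolding D_def using dual_norm_ge[OF f] by blast
  then have "\<bar>f x\<bar> / t \<le> D" using dual_scale[OF f x, of "1/t"] t by (simp add: abs_mult)
  then have "\<bar>f x\<bar> \<le> D * t" using t by (simp add: pos_divide_le_eq)
  also have "D * t = D * normM M x + D * (e / (D+1))" unfolding t_def by (simp add: algebra_simps)
  also have "D * (e / (D+1)) \<le> e" using D e by (simp add: field_simps)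
  finally show "\<bar>f x\<bar> \<le> D * normM M x + e" by simp
qed

lemma adm3:
  assumes M3: "\<forall>A :: nat set. card A = 3 \<longrightarrow> A \<in> M"
    and fin: "finite E1" "finite E2" "finite E3" and ne: "E1 \<noteq> {}" "E2 \<noteq> {}" "E3 \<noteq> {}"
    and s12: "\<forall>a\<in>E1. \<forall>b\<in>E2. a < b" and s23: "\<forall>a\<in>E2. \<forall>b\<in>E3. a < b"
  shows "admissible M [E1, E2, E3]"
proof -
  let ?ms = "[Min E1, Min E2, Min E3]"
  have m: "Min E1 \<in> E1" "Min E2 \<in> E2" "Min E3 \<in> E3" using fin ne by auto
  have lt: "Min E1 < Min E2" "Min E2 < Min E3" using m s12 s23 by auto
  have "card (set ?ms) = 3" using lt by simp
  then have F: "set ?ms \<in> M" using M3 by blast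
  let ?L = "[E1,E2,E3]"
  have k3: "k < length ?L \<Longrightarrow> k = 0 \<or> k = 1 \<or> k = 2" for k by auto
  have A: "\<forall>k<length ?L. finite (?L!k) \<and> ?L!k \<noteq> {}"
  proof (intro allI impI)
    fix k assume "k < length ?L" then have "k = 0 \<or> k = 1 \<or> k = 2" by (rule k3)
    then show "finite (?L!k) \<and> ?L!k \<noteq> {}" using fin ne by (elim disjE) simp_all
  qed
  have B: "\<forall>k. Suc k < length ?L \<longrightarrow> (\<forall>a\<in>?L!k. \<forall>b\<in>?L!Suc k. a < b)"
  proof (intro allI impI)
    fix k assume "Suc k < length ?L" then have "k = 0 \<or> k = 1" by auto
    then show "\<forall>a\<in>?L!k. \<forall>b\<in>?L!Suc k. a < b" using s12 s23 by (elim disjE) simp_all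
  qed
  have C: "\<forall>k<length ?L. \<forall>j\<in>?L!k. ?ms!k \<le> j"
  proof (intro allI impI)
    fix k assume "k < length ?L" then have "k = 0 \<or> k = 1 \<or> k = 2" by (rule k3)
    then show "\<forall>j\<in>?L!k. ?ms!k \<le> j" using fin by (elim disjE) simp_all
  qed
  have D: "\<forall>k. Suc k < length ?L \<longrightarrow> (\<forall>j\<in>?L!k. j < ?ms!Suc k)"
  proof (intro allI impI)
    fix k assume "Suc k < length ?L" then have "k = 0 \<or> k = 1" by auto
    then show "\<forall>j\<in>?L!k. j < ?ms!Suc k" using s12 s23 m by (elim disjE) simp_all
  qed
  have E: "length ?ms = length ?L" "set ?ms \<subseteq> set ?ms" by simp_all
  show ?thesis unfolding admissible_def
    using A B C D E F by blast
qed

definition spt :: "(nat \<Rightarrow> real) \<Rightarrow> nat set" where "spt x = {n. x n \<noteq> 0}"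

lemma restr_spt: "restr (spt x) x = x"
  unfolding restr_def spt_def by (auto simp: fun_eq_iff indicator_def)

lemma merge3:
  assumes M3: "\<forall>A :: nat set. card A = 3 \<longrightarrow> A \<in> M"
    and c: "u1 \<in> c00" "u2 \<in> c00" "u3 \<in> c00"
    and nz: "spt u1 \<noteq> {}" "spt u2 \<noteq> {}" "spt u3 \<noteq> {}"
    and s12: "\<forall>a\<in>spt u1. \<forall>b\<in>spt u2. a < b" and s23: "\<forall>a\<in>spt u2. \<forall>b\<in>spt u3. a < b"
    and r: "normM M u1 \<le> r" "normM M u2 \<le> r" "normM M u3 \<le> r"
  shows "normM M (\<lambda>n. u1 n + u2 n + u3 n) \<le> 2 * r"
proof (rule normM_leI)
  have fin: "finite (spt u1)" "finite (spt u2)" "finite (spt u3)" using c unfolding c00_def spt_def by auto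
  have adm: "admissible M [spt u1, spt u2, spt u3]" using adm3[OF M3 fin nz s12 s23] .
  show "(\<lambda>n. u1 n + u2 n + u3 n) \<in> c00"
    using c00_lin[OF c00_lin[OF c(1) c(2), of 1 1] c(3), of 1 1] by simp
  show "0 \<le> 2 * r" using r(1) normM_nonneg[OF c(1), of M] by simp
  fix t assume t: "2 * r < t"
  let ?xs = "[(\<lambda>n. u1 n / (t/2)), (\<lambda>n. u2 n / (t/2)), (\<lambda>n. u3 n / (t/2))]"
  have "normM M u1 < t/2" "normM M u2 < t/2" "normM M u3 < t/2" using r t by auto
  then have "(\<lambda>n. u1 n / (t/2)) \<in> Theta M" "(\<lambda>n. u2 n / (t/2)) \<in> Theta M" "(\<lambda>n. u3 n / (t/2)) \<in> Theta M"
    using normM_lt c by blast+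
  then have "set ?xs \<subseteq> Theta M" by (simp del: times_divide_eq_right divide_divide_eq_right)
  then have "(\<lambda>n. (1/2) * (\<Sum>k<length [spt u1, spt u2, spt u3]. restr ([spt u1, spt u2, spt u3]!k) (?xs!k) n)) \<in> Theta M"
    using adm by (intro Theta_adm) auto
  moreover have "(\<lambda>n. (1/2) * (\<Sum>k<length [spt u1, spt u2, spt u3]. restr ([spt u1, spt u2, spt u3]!k) (?xs!k) n))
      = (\<lambda>n. (u1 n + u2 n + u3 n) / t)"
  proof
    fix n
    have e: "restr (spt u) (\<lambda>n. u n / (t/2)) n = u n / (t/2)" for u
      unfolding restr_def spt_def by (auto simp: indicator_def)
    have e2: "restr (spt u) (\<lambda>n. u n * 2 / t) n = u n * 2 / t" for u
      unfolding restr_def spt_def by (auto simp: indicator_def)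
    show "(1/2) * (\<Sum>k<length [spt u1, spt u2, spt u3]. restr ([spt u1, spt u2, spt u3]!k) (?xs!k) n) = (u1 n + u2 n + u3 n) / t"
      by (simp add: numeral_3_eq_3 lessThan_Suc e e2 add_divide_distrib)
  qed
  ultimately show "(\<lambda>n. (u1 n + u2 n + u3 n) / t) \<in> Theta M" by simp
qed


lemma spt_fin: "x \<in> c00 \<Longrightarrow> finite (spt x)" unfolding c00_def spt_def by simp

lemma spt_empty: "spt x = {} \<Longrightarrow> x = (\<lambda>n. 0)" unfolding spt_def by auto

lemma shrink_core:
  assumes M3: "\<forall>A :: nat set. card A = 3 \<longrightarrow> A \<in> M"
    and f: "f \<in> dual_space M" and e: "\<epsilon> > 0"
    and H: "\<forall>N. \<exists>z\<in>c00. normM M z \<le> 1 \<and> f z > \<epsilon> \<and> (\<forall>n<N. z n = 0)"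
  shows False
proof -
  obtain g where g: "\<And>N. g N \<in> c00 \<and> normM M (g N) \<le> 1 \<and> f (g N) > \<epsilon> \<and> (\<forall>n<N. g N n = 0)"
    using H by metis
  have gne: "spt (g N) \<noteq> {}" for N
  proof
    assume "spt (g N) = {}"
    then have "f (g N) = 0" using spt_empty dual_zero[OF f] by metis
    then show False using g[of N] e by simp
  qed
  define lo :: "nat \<Rightarrow> nat" where "lo = rec_nat 0 (\<lambda>j l. Max (spt (g l)) + 1)"
  have lo0: "lo 0 = 0" and loS: "lo (Suc j) = Max (spt (g (lo j))) + 1" for j unfolding lo_def by simp_all
  define z where "z j = g (lo j)" for j
  have zsupp: "spt (z j) \<subseteq> {lo j..<lo (Suc j)}" for j
  proof
    fix n assume n: "n \<in> spt (z j)"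
    then have "\<not> n < lo j" using g[of "lo j"] unfolding z_def spt_def by auto
    moreover have "n \<le> Max (spt (g (lo j)))" using n spt_fin g unfolding z_def by auto
    ultimately show "n \<in> {lo j..<lo (Suc j)}" unfolding loS by auto
  qed
  have lo_mono: "lo j < lo (Suc j)" for j
  proof -
    obtain n where "n \<in> spt (z j)" using gne unfolding z_def by auto
    then show ?thesis using zsupp by fastforce
  qed
  have lo_mono1: "\<And>j. lo j \<le> lo (Suc j)" using lo_mono less_imp_le by blast
  have lo_mono': "i \<le> j \<Longrightarrow> lo i \<le> lo j" for i j using lift_Suc_mono_le[of lo, OF lo_mono1] by blast
  define X where "X s k = (\<lambda>n. \<Sum>j\<in>{s..<s+3^k}. z j n)" for s k
  obtain C where C: "C \<ge> 0" "\<forall>x\<in>c00. \<bar>f x\<bar> \<le> C * normM M x" using dual_bound[OF f] by blast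
  have claim: "X s k \<in> c00 \<and> normM M (X s k) \<le> 2^k \<and> f (X s k) \<ge> 3^k * \<epsilon> \<and> spt (X s k) \<subseteq> {lo s..<lo (s + 3^k)}" for k s
  proof (induction k arbitrary: s)
    case 0
    have "X s 0 = z s" unfolding X_def by simp
    then show ?case using g[of "lo s"] zsupp[of s] unfolding z_def by auto
  next
    case (Suc k)
    let ?a = "s" and ?b = "s + 3^k" and ?c = "s + 2 * 3^k"
    have X3: "X s (Suc k) = (\<lambda>n. X ?a k n + X ?b k n + X ?c k n)"
    proof
      fix n
      have "(\<Sum>j\<in>{s..<s+3^Suc k}. z j n) = (\<Sum>j\<in>{s..<s+3^k}. z j n) + (\<Sum>j\<in>{s+3^k..<s+3^Suc k}. z j n)"
        by (rule sum.atLeastLessThan_concat[symmetric]) auto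
      also have "(\<Sum>j\<in>{s+3^k..<s+3^Suc k}. z j n) = (\<Sum>j\<in>{s+3^k..<s+2*3^k}. z j n) + (\<Sum>j\<in>{s+2*3^k..<s+3^Suc k}. z j n)"
        by (rule sum.atLeastLessThan_concat[symmetric]) auto
      finally have calc: "(\<Sum>j\<in>{s..<s+3^Suc k}. z j n) = (\<Sum>j\<in>{s..<s+3^k}. z j n) + ((\<Sum>j\<in>{s+3^k..<s+2*3^k}. z j n) + (\<Sum>j\<in>{s+2*3^k..<s+3^Suc k}. z j n))" .
      have bc: "s + 3^k + 3^k = s + 2*3^k" by simp
      have cc: "s + 2*3^k + 3^k = s + 3^Suc k" by simp
      show "X s (Suc k) n = X ?a k n + X ?b k n + X ?c k n"
        unfolding X_def bc cc using calc by (simp only: add.assoc)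
    qed
    have ia: "X ?a k \<in> c00 \<and> normM M (X ?a k) \<le> 2^k \<and> f (X ?a k) \<ge> 3^k * \<epsilon> \<and> spt (X ?a k) \<subseteq> {lo ?a..<lo ?b}"
      using Suc.IH[of ?a] by simp
    have ib: "X ?b k \<in> c00 \<and> normM M (X ?b k) \<le> 2^k \<and> f (X ?b k) \<ge> 3^k * \<epsilon> \<and> spt (X ?b k) \<subseteq> {lo ?b..<lo ?c}"
      using Suc.IH[of ?b] by (simp add: mult_2 add.assoc)
    have ic: "X ?c k \<in> c00 \<and> normM M (X ?c k) \<le> 2^k \<and> f (X ?c k) \<ge> 3^k * \<epsilon> \<and> spt (X ?c k) \<subseteq> {lo ?c..<lo (s + 3^Suc k)}"
      using Suc.IH[of ?c] by (simp add: algebra_simps)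
    have pos: "3^k * \<epsilon> > 0" using e by simp
    have nz: "spt (X u k) \<noteq> {}" if "f (X u k) \<ge> 3^k * \<epsilon>" for u
    proof
      assume "spt (X u k) = {}"
      then have "f (X u k) = 0" using spt_empty dual_zero[OF f] by metis
      then show False using that pos by simp
    qed
    have s1: "\<forall>a\<in>spt (X ?a k). \<forall>b\<in>spt (X ?b k). a < b" using ia ib by fastforce
    have s2: "\<forall>a\<in>spt (X ?b k). \<forall>b\<in>spt (X ?c k). a < b" using ib ic by fastforce
    have nm: "normM M (X s (Suc k)) \<le> 2 * 2^k"
      unfolding X3 using merge3[OF M3, of "X ?a k" "X ?b k" "X ?c k" "2^k"] ia ib ic nz s1 s2 by auto
    have c1: "(\<lambda>n. X ?a k n + X ?b k n) \<in> c00" using c00_lin[of "X ?a k" "X ?b k" 1 1] ia ib by simp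
    have cc: "X s (Suc k) \<in> c00" unfolding X3 using c00_lin[OF c1, of "X ?c k" 1 1] ic by simp
    have "f (X s (Suc k)) = f (X ?a k) + f (X ?b k) + f (X ?c k)"
      unfolding X3 using dual_add[OF f c1, of "X ?c k"] dual_add[OF f, of "X ?a k" "X ?b k"] ia ib ic by simp
    then have fx: "f (X s (Suc k)) \<ge> 3^Suc k * \<epsilon>" using ia ib ic by simp
    have "spt (X s (Suc k)) \<subseteq> spt (X ?a k) \<union> spt (X ?b k) \<union> spt (X ?c k)"
      unfolding X3 spt_def by auto
    also have "\<dots> \<subseteq> {lo s..<lo (s + 3^Suc k)}"
    proof -
      have m1: "lo s \<le> lo ?b" "lo ?b \<le> lo ?c" "lo ?c \<le> lo (s + 3^Suc k)" by (intro lo_mono'; simp)+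
      have "{lo s..<lo ?b} \<subseteq> {lo s..<lo (s + 3^Suc k)}" "{lo ?b..<lo ?c} \<subseteq> {lo s..<lo (s + 3^Suc k)}"
        "{lo ?c..<lo (s + 3^Suc k)} \<subseteq> {lo s..<lo (s + 3^Suc k)}" using m1 by auto
      then show ?thesis using ia ib ic by blast
    qed
    finally show ?case using cc nm fx by simp
  qed
  obtain k where k: "C / \<epsilon> < (3/2::real)^k" using real_arch_pow[of "3/2" "C / \<epsilon>"] by auto
  have "3^k * \<epsilon> \<le> f (X 0 k)" using claim by blast
  also have "\<dots> \<le> C * normM M (X 0 k)"
  proof -
    have "X 0 k \<in> c00" using claim by blast
    then have "\<bar>f (X 0 k)\<bar> \<le> C * normM M (X 0 k)" using C by blast
    then show ?thesis by simp
  qed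
  also have "\<dots> \<le> C * 2^k" using C claim by (intro mult_left_mono) auto
  finally have "3^k * \<epsilon> \<le> C * 2^k" .
  then have "(3/2::real)^k \<le> C / \<epsilon>" using e by (simp add: field_simps power_divide)
  then show False using k by simp
qed

lemma shrink_tail:
  assumes M3: "\<forall>A :: nat set. card A = 3 \<longrightarrow> A \<in> M"
    and f: "f \<in> dual_space M" and e: "\<epsilon> > 0"
  shows "\<exists>N. \<forall>x\<in>c00. normM M x \<le> 1 \<longrightarrow> \<bar>f (restr {N..} x)\<bar> \<le> \<epsilon>"
proof (rule ccontr)
  assume "\<not> ?thesis"
  then have H: "\<forall>N. \<exists>x\<in>c00. normM M x \<le> 1 \<and> \<bar>f (restr {N..} x)\<bar> > \<epsilon>" by (auto simp: not_le)
  have "\<forall>N. \<exists>z\<in>c00. normM M z \<le> 1 \<and> f z > \<epsilon> \<and> (\<forall>n<N. z n = 0)"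
  proof
    fix N
    obtain x where x: "x \<in> c00" "normM M x \<le> 1" "\<bar>f (restr {N..} x)\<bar> > \<epsilon>" using H by blast
    let ?z = "restr {N..} x"
    have zc: "?z \<in> c00" using restr_c00[OF x(1)] .
    have zn: "normM M ?z \<le> 1" using normM_restr[OF x(1), of M "{N..}"] x(2) by simp
    have z0: "\<forall>n<N. ?z n = 0" unfolding restr_def by simp
    show "\<exists>z\<in>c00. normM M z \<le> 1 \<and> f z > \<epsilon> \<and> (\<forall>n<N. z n = 0)"
    proof (cases "f ?z > \<epsilon>")
      case True then show ?thesis using zc zn z0 by blast
    next
      case False
      then have fz: "f ?z < - \<epsilon>" using x(3) by auto
      have "(\<lambda>n. - ?z n) \<in> c00" using c00_lin[OF zc zc, of "-1" 0] by simp
      moreover have "normM M (\<lambda>n. - ?z n) \<le> 1" using normM_neg[OF zc, of M] zn by simp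
      moreover have "f (\<lambda>n. - ?z n) > \<epsilon>" using dual_scale[OF f zc, of "-1"] fz by simp
      moreover have "\<forall>n<N. - ?z n = 0" using z0 by simp
      ultimately show ?thesis by blast
    qed
  qed
  then show False using shrink_core[OF M3 f e] by blast
qed

lemma decomp_proj:
  "x = (\<lambda>n. restr {N..} x n + (\<Sum>i<N. x i * unitvec i n))"
proof
  fix n
  have "(\<Sum>i<N. x i * unitvec i n) = (if n < N then x n else 0)"
  proof (cases "n < N")
    case True
    have "\<forall>i\<in>{..<N}-{n}. x i * unitvec i n = 0" by (auto simp: unitvec_def)
    then have z: "(\<Sum>i\<in>{..<N}-{n}. x i * unitvec i n) = 0" by (rule sum.neutral)
    have "(\<Sum>i<N. x i * unitvec i n) = x n * unitvec n n + (\<Sum>i\<in>{..<N}-{n}. x i * unitvec i n)"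
      using True by (subst sum.remove[of _ n]) auto
    then have "(\<Sum>i<N. x i * unitvec i n) = x n * unitvec n n" using z by simp
    then show ?thesis using True by (simp add: unitvec_def)
  next
    case False
    then have "\<forall>i\<in>{..<N}. x i * unitvec i n = 0" by (auto simp: unitvec_def)
    then have "(\<Sum>i<N. x i * unitvec i n) = 0" by (rule sum.neutral)
    then show ?thesis using False by simp
  qed
  then show "x n = restr {N..} x n + (\<Sum>i<N. x i * unitvec i n)" by (simp add: restr_def)
qed

lemma unitvec_scale_c00: "(\<lambda>n. a * unitvec i n) \<in> c00"
  using c00_lin[of "unitvec i" "unitvec i" a 0] unitvec_c00 by simp

lemma dual_proj:
  assumes f: "f \<in> dual_space M" and x: "x \<in> c00"
  shows "f x = f (restr {N..} x) + (\<Sum>i<N. f (unitvec i) * x i)"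
proof -
  have s: "(\<lambda>n. \<Sum>i<N. x i * unitvec i n) \<in> c00" using sum_c00[of "{..<N}" "\<lambda>i n. x i * unitvec i n"] unitvec_scale_c00 by simp
  have "f x = f (restr {N..} x) + f (\<lambda>n. \<Sum>i<N. x i * unitvec i n)"
    using dual_add[OF f restr_c00[OF x] s] decomp_proj[of x N] by metis
  also have "f (\<lambda>n. \<Sum>i<N. x i * unitvec i n) = (\<Sum>i<N. f (\<lambda>n. x i * unitvec i n))"
    using dual_sum[OF f, of "{..<N}" "\<lambda>i n. x i * unitvec i n"] unitvec_scale_c00 by simp
  also have "\<dots> = (\<Sum>i<N. f (unitvec i) * x i)"
    using dual_scale[OF f unitvec_c00] by (simp add: mult.commute)
  finally show ?thesis .
qed

theorem shrinking_basis_thm: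
  assumes M3: "\<forall>A :: nat set. card A = 3 \<longrightarrow> A \<in> M"
  shows "shrinking_basis M"
  unfolding shrinking_basis_def
proof
  show "is_basis M" unfolding is_basis_def
  proof (intro exI[of _ 1] allI ballI)
    fix N x assume x: "x \<in> c00"
    have "proj N x = restr {..<N} x" unfolding proj_def restr_def by auto
    then show "normM M (proj N x) \<le> 1 * normM M x" using normM_restr[OF x] by simp
  qed
  show "shrinking M" unfolding shrinking_def
  proof (intro ballI allI impI)
    fix f and \<epsilon> :: real assume f: "f \<in> dual_space M" and e: "\<epsilon> > 0"
    obtain N where N: "\<forall>x\<in>c00. normM M x \<le> 1 \<longrightarrow> \<bar>f (restr {N..} x)\<bar> \<le> \<epsilon>/2"
      using shrink_tail[OF M3 f, of "\<epsilon>/2"] e by auto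
    have "dual_norm M (\<lambda>x. if x \<in> c00 then f x - (\<Sum>i<N. f (unitvec i) * x i) else 0) \<le> \<epsilon>/2"
    proof (rule dual_norm_le)
      fix x assume x: "x \<in> c00" "normM M x \<le> 1"
      then show "\<bar>(if x \<in> c00 then f x - (\<Sum>i<N. f (unitvec i) * x i) else 0)\<bar> \<le> \<epsilon>/2"
        using dual_proj[OF f x(1), of N] N by simp
    qed
    then show "\<exists>N c. dual_norm M (\<lambda>x. if x \<in> c00 then f x - (\<Sum>i<N. c i * x i) else 0) < \<epsilon>"
      using e by (intro exI[of _ N] exI[of _ "\<lambda>i. f (unitvec i)"]) simp
  qed
qed


definition hit :: "(nat \<Rightarrow> nat) \<Rightarrow> (nat \<Rightarrow> nat) \<Rightarrow> nat set \<Rightarrow> nat set" where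
  "hit lo hi A = {i. \<exists>x\<in>A. lo i \<le> x \<and> x \<le> hi i}"

definition valid :: "(nat \<Rightarrow> nat) \<Rightarrow> (nat \<Rightarrow> nat) \<Rightarrow> bool" where
  "valid lo hi \<longleftrightarrow> (\<forall>i. lo i \<le> hi i \<and> hi i < lo (Suc i))"

definition cvx :: "(nat \<Rightarrow> real) \<Rightarrow> nat set \<Rightarrow> nat \<Rightarrow> bool" where
  "cvx a D m \<longleftrightarrow> finite D \<and> D \<noteq> {} \<and> D \<subseteq> {m..} \<and> (\<forall>i\<in>D. 0 \<le> a i) \<and> sum a D = 1"

definition SM :: "nat set set \<Rightarrow> bool" where
  "SM Fam \<longleftrightarrow> (\<forall>\<epsilon>>0. \<forall>lo hi. valid lo hi \<longrightarrow>
      (\<forall>m. \<exists>a D. cvx a D m \<and> (\<forall>A\<in>Fam. sum a (D \<inter> hit lo hi A) < \<epsilon>)))"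

lemma valid_mono:
  assumes "valid lo hi" "i < j"
  shows "hi i < lo j"
  using assms(2)
proof (induction j)
  case 0 then show ?case by simp
next
  case (Suc j)
  show ?case
  proof (cases "i = j")
    case True then show ?thesis using assms(1) unfolding valid_def by auto
  next
    case False
    then have "hi i < lo j" using Suc by auto
    moreover have "lo j \<le> hi j" "hi j < lo (Suc j)" using assms(1) unfolding valid_def by auto
    ultimately show ?thesis by simp
  qed
qed

lemma valid_le:
  assumes "valid lo hi" "i \<le> j"
  shows "lo i \<le> lo j" "hi i \<le> hi j" "lo i \<le> hi j"
proof -
  have lh: "lo k \<le> hi k" for k using assms(1) unfolding valid_def by auto
  show "lo i \<le> lo j" using valid_mono[OF assms(1), of i j] lh[of i] assms(2) by (cases "i = j") auto
  show "hi i \<le> hi j" using valid_mono[OF assms(1), of i j] lh[of j] assms(2) by (cases "i = j") auto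
  show "lo i \<le> hi j" using valid_mono[OF assms(1), of i j] lh[of i] lh[of j] assms(2) by (cases "i = j") auto
qed

lemma cvx_point: "cvx (\<lambda>_. 1) {m} m" unfolding cvx_def by auto

lemma cvx_sub_le: "cvx a D m \<Longrightarrow> sum a (D \<inter> X) \<le> 1"
proof -
  assume c: "cvx a D m"
  have "sum a (D \<inter> X) \<le> sum a D" using c unfolding cvx_def by (intro sum_mono2) auto
  then show ?thesis using c unfolding cvx_def by simp
qed

lemma cvx_sub_nonneg: "cvx a D m \<Longrightarrow> 0 \<le> sum a (D \<inter> X)"
  unfolding cvx_def by (intro sum_nonneg) auto

definition cmb :: "(nat \<Rightarrow> real) \<Rightarrow> nat set \<Rightarrow> (nat \<Rightarrow> nat \<Rightarrow> real) \<Rightarrow> (nat \<Rightarrow> nat set) \<Rightarrow> nat \<Rightarrow> real" where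
  "cmb b E A Ds = (\<lambda>i. \<Sum>j\<in>E. b j * (if i \<in> Ds j then A j i else 0))"

lemma cmb_sum:
  assumes "finite E" "\<forall>j\<in>E. finite (Ds j)"
  shows "sum (cmb b E A Ds) ((\<Union>j\<in>E. Ds j) \<inter> X) = (\<Sum>j\<in>E. b j * sum (A j) (Ds j \<inter> X))"
proof -
  let ?U = "(\<Union>j\<in>E. Ds j) \<inter> X"
  have fU: "finite ?U" using assms by auto
  have "sum (cmb b E A Ds) ?U = (\<Sum>j\<in>E. \<Sum>i\<in>?U. b j * (if i \<in> Ds j then A j i else 0))"
    unfolding cmb_def by (rule sum.swap)
  also have "\<dots> = (\<Sum>j\<in>E. b j * sum (A j) (Ds j \<inter> X))"
  proof (rule sum.cong[OF refl])
    fix j assume j: "j \<in> E"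
    have "(\<Sum>i\<in>?U. b j * (if i \<in> Ds j then A j i else 0)) = b j * (\<Sum>i\<in>?U. (if i \<in> Ds j then A j i else 0))"
      by (simp add: sum_distrib_left)
    also have "(\<Sum>i\<in>?U. (if i \<in> Ds j then A j i else 0)) = sum (A j) (?U \<inter> Ds j)"
      using fU by (simp add: sum.inter_restrict)
    also have "?U \<inter> Ds j = Ds j \<inter> X" using j by auto
    finally show "(\<Sum>i\<in>?U. b j * (if i \<in> Ds j then A j i else 0)) = b j * sum (A j) (Ds j \<inter> X)" .
  qed
  finally show ?thesis .
qed

lemma cmb_cvx:
  assumes b: "cvx b E m'" and A: "\<forall>j\<in>E. cvx (A j) (Ds j) (ms j)" and ms: "\<forall>j\<in>E. m \<le> ms j"
  shows "cvx (cmb b E A Ds) (\<Union>j\<in>E. Ds j) m"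
proof -
  have fE: "finite E" "E \<noteq> {}" using b unfolding cvx_def by auto
  have fD: "\<forall>j\<in>E. finite (Ds j)" using A unfolding cvx_def by auto
  have "sum (cmb b E A Ds) ((\<Union>j\<in>E. Ds j) \<inter> UNIV) = (\<Sum>j\<in>E. b j * sum (A j) (Ds j \<inter> UNIV))"
    using cmb_sum[OF fE(1) fD] .
  also have "\<dots> = (\<Sum>j\<in>E. b j)" using A unfolding cvx_def by simp
  also have "\<dots> = 1" using b unfolding cvx_def by simp
  finally have s: "sum (cmb b E A Ds) (\<Union>j\<in>E. Ds j) = 1" by simp
  have nn: "\<forall>i\<in>(\<Union>j\<in>E. Ds j). 0 \<le> cmb b E A Ds i"
    unfolding cmb_def using A b unfolding cvx_def by (auto intro!: sum_nonneg)
  have sub: "(\<Union>j\<in>E. Ds j) \<subseteq> {m..}" using A ms unfolding cvx_def by force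
  have ne: "(\<Union>j\<in>E. Ds j) \<noteq> {}" using A fE unfolding cvx_def by auto
  show ?thesis unfolding cvx_def using s nn sub ne fE fD by auto
qed

lemma convex_strict:
  assumes "cvx b E m" "\<forall>j\<in>E. x j < \<epsilon>"
  shows "(\<Sum>j\<in>E. b j * x j) < \<epsilon>"
proof -
  have fE: "finite E" and nn: "\<forall>j\<in>E. 0 \<le> b j" and s: "sum b E = 1" using assms(1) unfolding cvx_def by auto
  obtain j0 where j0: "j0 \<in> E" "b j0 > 0"
  proof (rule ccontr)
    assume "\<not> thesis"
    then have "\<forall>j\<in>E. b j = 0" using nn that by force
    then show False using s by simp
  qed
  have "(\<Sum>j\<in>E. b j * x j) < (\<Sum>j\<in>E. b j * \<epsilon>)"
  proof (rule sum_strict_mono_ex1[OF fE])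
    show "\<forall>j\<in>E. b j * x j \<le> b j * \<epsilon>" using nn assms(2) by (auto intro: mult_left_mono less_imp_le)
    show "\<exists>j\<in>E. b j * x j < b j * \<epsilon>" using j0 assms(2) mult_strict_left_mono by blast
  qed
  also have "\<dots> = \<epsilon>" using s by (simp add: sum_distrib_right[symmetric])
  finally show ?thesis .
qed

lemma select_seq:
  assumes "\<forall>m. \<exists>a D. cvx a D m \<and> Q m a D"
  obtains A Ds ms where "ms 0 = mst" "\<And>j. cvx (A j) (Ds j) (ms j)" "\<And>j. Q (ms j) (A j) (Ds j)"
    "\<And>j. ms (Suc j) = Max (Ds j) + 1"
proof -
  have "\<forall>m. \<exists>p. cvx (fst p) (snd p) m \<and> Q m (fst p) (snd p)" using assms by fastforce
  from choice[OF this] obtain F where F: "\<And>m. cvx (fst (F m)) (snd (F m)) m \<and> Q m (fst (F m)) (snd (F m))"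
    by blast
  define ms where "ms = rec_nat mst (\<lambda>j mj. Max (snd (F mj)) + 1)"
  have "ms 0 = mst" "\<And>j. ms (Suc j) = Max (snd (F (ms j))) + 1" unfolding ms_def by simp_all
  then show ?thesis using that[of ms "\<lambda>j. fst (F (ms j))" "\<lambda>j. snd (F (ms j))"] F by blast
qed

lemma select_props:
  assumes c: "\<And>j. cvx (A j) (Ds j) (ms j)" and s: "\<And>j. ms (Suc j) = Max (Ds j) + 1"
  shows "\<And>i j. i \<le> j \<Longrightarrow> ms i \<le> ms j"
    and "\<And>j j' x y. j < j' \<Longrightarrow> x \<in> Ds j \<Longrightarrow> y \<in> Ds j' \<Longrightarrow> x < y"
    and "\<And>j. Max (Ds j) < Min (Ds (Suc j))"
    and "\<And>j. Min (Ds j) \<le> Max (Ds j)"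
proof -
  have f: "finite (Ds j)" "Ds j \<noteq> {}" "Ds j \<subseteq> {ms j..}" for j using c[of j] unfolding cvx_def by auto
  have m1: "ms j \<le> ms (Suc j)" for j
  proof -
    obtain x where "x \<in> Ds j" using f(2)[of j] by blast
    then have "ms j \<le> x" "x \<le> Max (Ds j)" using f by auto
    then show ?thesis using s[of j] by simp
  qed
  show mono: "\<And>i j. i \<le> j \<Longrightarrow> ms i \<le> ms j" using lift_Suc_mono_le[of ms, OF m1] by blast
  show "\<And>j j' x y. j < j' \<Longrightarrow> x \<in> Ds j \<Longrightarrow> y \<in> Ds j' \<Longrightarrow> x < y"
  proof -
    fix j j' x y assume "j < j'" "x \<in> Ds j" "y \<in> Ds j'"
    then have "x \<le> Max (Ds j)" "ms (Suc j) \<le> ms j'" "ms j' \<le> y" using f mono by auto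
    then show "x < y" using s[of j] by simp
  qed
  show "\<And>j. Max (Ds j) < Min (Ds (Suc j))"
  proof -
    fix j
    have "Min (Ds (Suc j)) \<in> Ds (Suc j)" using f by auto
    then have "ms (Suc j) \<le> Min (Ds (Suc j))" using f by auto
    then show "Max (Ds j) < Min (Ds (Suc j))" using s[of j] by simp
  qed
  show "\<And>j. Min (Ds j) \<le> Max (Ds j)" using f by simp
qed

lemma valid_blocks:
  assumes v: "valid lo hi" and mm: "\<And>j. Max (Ds j) < Min (Ds (Suc j))" "\<And>j. Min (Ds j) \<le> Max (Ds j)"
  shows "valid (\<lambda>j. lo (Min (Ds j))) (\<lambda>j. hi (Max (Ds j)))"
  unfolding valid_def using valid_le(3)[OF v mm(2)] valid_mono[OF v mm(1)] by auto

lemma hit_blocks: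
  assumes v: "valid lo hi" and fD: "finite (Ds j)" and i: "i \<in> Ds j" "i \<in> hit lo hi A"
  shows "j \<in> hit (\<lambda>j. lo (Min (Ds j))) (\<lambda>j. hi (Max (Ds j))) A"
proof -
  obtain x where x: "x \<in> A" "lo i \<le> x" "x \<le> hi i" using i unfolding hit_def by auto
  have "Min (Ds j) \<le> i" "i \<le> Max (Ds j)" using fD i by auto
  then have "lo (Min (Ds j)) \<le> lo i" "hi i \<le> hi (Max (Ds j))" using valid_le[OF v] by auto
  then have "lo (Min (Ds j)) \<le> x" "x \<le> hi (Max (Ds j))" using x by linarith+
  then show ?thesis unfolding hit_def using x(1) by blast
qed

lemma SM_union:
  assumes F1: "SM F1" and F2: "SM F2"
  shows "SM (F1 \<union> F2)"
  unfolding SM_def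
proof (intro allI impI)
  fix \<epsilon> :: real and lo hi m assume e: "\<epsilon> > 0" and v: "valid lo hi"
  have "\<forall>m. \<exists>a D. cvx a D m \<and> (\<forall>A\<in>F1. sum a (D \<inter> hit lo hi A) < \<epsilon>)"
    using F1 e v unfolding SM_def by blast
  then obtain A Ds ms where sel: "ms 0 = m" "\<And>j. cvx (A j) (Ds j) (ms j)"
    "\<And>j. \<forall>B\<in>F1. sum (A j) (Ds j \<inter> hit lo hi B) < \<epsilon>" "\<And>j. ms (Suc j) = Max (Ds j) + 1"
    by (rule select_seq[where mst = m and Q = "\<lambda>m a D. \<forall>A\<in>F1. sum a (D \<inter> hit lo hi A) < \<epsilon>"]) blast
  note sp = select_props[where A = A and Ds = Ds and ms = ms, OF sel(2) sel(4)]
  let ?lo = "\<lambda>j. lo (Min (Ds j))" and ?hi = "\<lambda>j. hi (Max (Ds j))"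
  have v': "valid ?lo ?hi" using valid_blocks[where Ds = Ds, OF v sp(3) sp(4)] .
  obtain b E where bE: "cvx b E 0" "\<forall>B\<in>F2. sum b (E \<inter> hit ?lo ?hi B) < \<epsilon>"
    using F2 e v' unfolding SM_def by blast
  have fE: "finite E" using bE unfolding cvx_def by auto
  have fD: "\<forall>j\<in>E. finite (Ds j)" using sel(2) unfolding cvx_def by auto
  have msm: "\<forall>j\<in>E. m \<le> ms j" using sp(1)[of 0] sel(1) by auto
  have cv: "cvx (cmb b E A Ds) (\<Union>j\<in>E. Ds j) m" using cmb_cvx[OF bE(1) _ msm] sel(2) by auto
  show "\<exists>a D. cvx a D m \<and> (\<forall>B\<in>F1 \<union> F2. sum a (D \<inter> hit lo hi B) < \<epsilon>)"
  proof (intro exI conjI ballI)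
    show "cvx (cmb b E A Ds) (\<Union>j\<in>E. Ds j) m" using cv .
    fix B assume B: "B \<in> F1 \<union> F2"
    have eq: "sum (cmb b E A Ds) ((\<Union>j\<in>E. Ds j) \<inter> hit lo hi B) = (\<Sum>j\<in>E. b j * sum (A j) (Ds j \<inter> hit lo hi B))"
      using cmb_sum[OF fE fD] .
    show "sum (cmb b E A Ds) ((\<Union>j\<in>E. Ds j) \<inter> hit lo hi B) < \<epsilon>"
    proof (cases "B \<in> F1")
      case True
      then have "\<forall>j\<in>E. sum (A j) (Ds j \<inter> hit lo hi B) < \<epsilon>" using sel(3) by blast
      then show ?thesis unfolding eq by (rule convex_strict[OF bE(1)])
    next
      case False
      then have B2: "B \<in> F2" using B by auto
      have "(\<Sum>j\<in>E. b j * sum (A j) (Ds j \<inter> hit lo hi B)) \<le> (\<Sum>j\<in>E. b j * (if j \<in> hit ?lo ?hi B then 1 else 0))"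
      proof (rule sum_mono)
        fix j assume j: "j \<in> E"
        have bj: "0 \<le> b j" using bE(1) j unfolding cvx_def by auto
        show "b j * sum (A j) (Ds j \<inter> hit lo hi B) \<le> b j * (if j \<in> hit ?lo ?hi B then 1 else 0)"
        proof (cases "j \<in> hit ?lo ?hi B")
          case True
          then show ?thesis using cvx_sub_le[OF sel(2)[of j]] bj by (simp add: mult_left_le)
        next
          case False
          then have "Ds j \<inter> hit lo hi B = {}" using hit_blocks[OF v] fD j by blast
          then show ?thesis using False by simp
        qed
      qed
      also have "\<dots> = sum b (E \<inter> hit ?lo ?hi B)"
        using fE by (simp add: sum.inter_restrict[symmetric] if_distrib cong: if_cong)
      also have "\<dots> < \<epsilon>" using bE(2) B2 by blast
      finally show ?thesis unfolding eq .
    qed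
  qed
qed

lemma SM_empty: "SM {}"
  unfolding SM_def using cvx_point by blast

lemma SM_finite_union: "finite S \<Longrightarrow> (\<forall>n\<in>S. SM (Fam n)) \<Longrightarrow> SM (\<Union>n\<in>S. Fam n)"
proof (induction S rule: finite_induct)
  case empty then show ?case using SM_empty by simp
next
  case (insert n S)
  then have "SM (Fam n \<union> (\<Union>n\<in>S. Fam n))" using SM_union by auto
  then show ?case by simp
qed


definition NN :: "nat set set \<Rightarrow> nat set set" where "NN M = {B. \<exists>F\<in>M. B \<subseteq> F}"
definition NB :: "nat set set \<Rightarrow> nat set \<Rightarrow> nat set set" where
  "NB M B = {A. B \<union> A \<in> NN M \<and> (\<forall>b\<in>B. \<forall>x\<in>A. b < x)}"
definition RR :: "nat set set \<Rightarrow> (nat set \<times> nat set) set" where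
  "RR M = {(insert n B, B) | n B. insert n B \<in> NN M \<and> (\<forall>b\<in>B. b < n)}"

lemma NN_sub: "A \<in> NN M \<Longrightarrow> B \<subseteq> A \<Longrightarrow> B \<in> NN M" unfolding NN_def by blast

lemma hit_empty: "hit lo hi {} = {}" unfolding hit_def by auto

lemma SM_step:
  assumes fin: "\<forall>F\<in>M. finite F" and IH: "\<forall>C. (C, B) \<in> RR M \<longrightarrow> SM (NB M C)"
  shows "SM (NB M B)"
  unfolding SM_def
proof (intro allI impI)
  fix \<epsilon> :: real and lo hi m assume e: "\<epsilon> > 0" and v: "valid lo hi"
  obtain k where k: "inverse (real (Suc k)) < \<epsilon>/2" using reals_Archimedean[of "\<epsilon>/2"] e by auto
  define K where "K = Suc k"
  have K: "K > 0" "1 / real K < \<epsilon>/2" using k unfolding K_def by (auto simp: inverse_eq_divide)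
  define Ch where "Ch m' = {n. n \<le> hi (m' - 1) \<and> (\<forall>b\<in>B. b < n) \<and> insert n B \<in> NN M}" for m'
  have SMch: "SM (\<Union>n\<in>Ch m'. NB M (insert n B))" for m'
  proof (rule SM_finite_union)
    show "finite (Ch m')" unfolding Ch_def by (rule finite_subset[of _ "{..hi (m' - 1)}"]) auto
    show "\<forall>n\<in>Ch m'. SM (NB M (insert n B))" using IH unfolding Ch_def RR_def by blast
  qed
  have "\<forall>m'. \<exists>a D. cvx a D m' \<and> (\<forall>A\<in>(\<Union>n\<in>Ch m'. NB M (insert n B)). sum a (D \<inter> hit lo hi A) < \<epsilon>/2)"
    using SMch e v unfolding SM_def by (meson half_gt_zero)
  then obtain A Ds ms where sel: "ms 0 = m" "\<And>j. cvx (A j) (Ds j) (ms j)"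
    "\<And>j. \<forall>X\<in>(\<Union>n\<in>Ch (ms j). NB M (insert n B)). sum (A j) (Ds j \<inter> hit lo hi X) < \<epsilon>/2"
    "\<And>j. ms (Suc j) = Max (Ds j) + 1"
    by (rule select_seq[where mst = m and Q = "\<lambda>m' a D. \<forall>A\<in>(\<Union>n\<in>Ch m'. NB M (insert n B)). sum a (D \<inter> hit lo hi A) < \<epsilon>/2"]) blast
  note sp = select_props[where A = A and Ds = Ds and ms = ms, OF sel(2) sel(4)]
  have fD: "finite (Ds j)" "Ds j \<noteq> {}" "Ds j \<subseteq> {ms j..}" for j using sel(2)[of j] unfolding cvx_def by auto
  define P where "P t = hi (Max (Ds t))" for t
  have Mx: "Max (Ds t) \<le> Max (Ds (Suc t))" for t using sp(3)[of t] sp(4)[of "Suc t"] by simp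
  have Pmono: "t \<le> t' \<Longrightarrow> P t \<le> P t'" for t t'
    unfolding P_def using lift_Suc_mono_le[of "\<lambda>t. Max (Ds t)", OF Mx] valid_le(2)[OF v] by blast
  define E where "E = {..<K}"
  define b where "b = (\<lambda>_::nat. 1 / real K)"
  have bE: "cvx b E 0" unfolding cvx_def b_def E_def using K by auto
  have fE: "finite E" unfolding E_def by simp
  have msm: "\<forall>j\<in>E. m \<le> ms j" using sp(1)[of 0] sel(1) by auto
  have cv: "cvx (cmb b E A Ds) (\<Union>j\<in>E. Ds j) m" using cmb_cvx[OF bE _ msm] sel(2) by auto
  show "\<exists>a D. cvx a D m \<and> (\<forall>X\<in>NB M B. sum a (D \<inter> hit lo hi X) < \<epsilon>)"
  proof (intro exI conjI ballI)
    show "cvx (cmb b E A Ds) (\<Union>j\<in>E. Ds j) m" using cv .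
    fix X assume X: "X \<in> NB M B"
    define w where "w t = sum (A t) (Ds t \<inter> hit lo hi X)" for t
    have eq: "sum (cmb b E A Ds) ((\<Union>j\<in>E. Ds j) \<inter> hit lo hi X) = (\<Sum>t\<in>E. b t * w t)"
      unfolding w_def using cmb_sum[OF fE] fD by blast
    define t0 where "t0 = (if X = {} then 0 else (LEAST t. Min X \<le> P t))"
    have wb: "w t \<le> \<epsilon>/2 + (if t = t0 then 1 else 0)" for t
    proof (cases "X = {}")
      case True
      then have "w t = 0" unfolding w_def by (simp add: hit_empty)
      then show ?thesis using e by simp
    next
      case False
      define n where "n = Min X"
      have Xb: "B \<union> X \<in> NN M" "\<forall>b\<in>B. \<forall>x\<in>X. b < x" using X unfolding NB_def by auto
      obtain G where G: "G \<in> M" "B \<union> X \<subseteq> G" using Xb(1) unfolding NN_def by auto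
      have finX: "finite X" using G fin by (meson Un_upper2 rev_finite_subset subset_trans)
      have nX: "n \<in> X" "\<forall>x\<in>X. n \<le> x" unfolding n_def using finX False by auto
      have t0: "t0 = (LEAST t. n \<le> P t)" unfolding t0_def n_def using False by simp
      show ?thesis
      proof (cases "n \<le> P t")
        case False
        have "Ds t \<inter> hit lo hi X = {}"
        proof (rule ccontr)
          assume "Ds t \<inter> hit lo hi X \<noteq> {}"
          then obtain i x where i: "i \<in> Ds t" "x \<in> X" "lo i \<le> x" "x \<le> hi i" unfolding hit_def by auto
          have "i \<le> Max (Ds t)" using i(1) fD by auto
          then have "hi i \<le> P t" unfolding P_def using valid_le(2)[OF v] by blast
          then show False using i nX False by fastforce
        qed
        then have "w t = 0" unfolding w_def by simp
        then show ?thesis using e by simp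
      next
        case True
        show ?thesis
        proof (cases "t = t0")
          case True
          have "w t \<le> 1" unfolding w_def by (rule cvx_sub_le[OF sel(2)[of t]])
          then show ?thesis using True e by simp
        next
          case ne: False
          have "t0 \<le> t" unfolding t0 using True by (rule Least_le)
          then have lt: "t0 < t" using ne by simp
          then obtain t' where t': "t = Suc t'" "t0 \<le> t'" by (cases t) auto
          have "n \<le> P t0" unfolding t0 using True by (rule LeastI)
          then have nP: "n \<le> P t'" using Pmono[OF t'(2)] by simp
          have ms1: "ms t - 1 = Max (Ds t')" using sel(4)[of t'] t'(1) by simp
          have nB: "\<forall>b\<in>B. b < n" using Xb(2) nX by auto
          have inN: "insert n B \<in> NN M" using NN_sub[OF Xb(1)] nX by auto
          have nCh: "n \<in> Ch (ms t)" unfolding Ch_def using nP nB inN ms1 P_def by simp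
          define X' where "X' = X - {n}"
          have XX: "insert n B \<union> X' = B \<union> X" unfolding X'_def using nX by auto
          have X'NB: "X' \<in> NB M (insert n B)" unfolding NB_def
          proof (intro CollectI conjI ballI)
            show "insert n B \<union> X' \<in> NN M" using XX Xb(1) by simp
            fix b' x assume b': "b' \<in> insert n B" and x: "x \<in> X'"
            then have xX: "x \<in> X" "x \<noteq> n" unfolding X'_def by auto
            show "b' < x"
            proof (cases "b' = n")
              case True then show ?thesis using xX nX by fastforce
            next
              case False then show ?thesis using b' xX Xb(2) by auto
            qed
          qed
          have hh: "Ds t \<inter> hit lo hi X = Ds t \<inter> hit lo hi X'"
          proof (intro equalityI subsetI)
            fix i assume i: "i \<in> Ds t \<inter> hit lo hi X"
            then obtain x where x: "x \<in> X" "lo i \<le> x" "x \<le> hi i" unfolding hit_def by auto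
            have "Max (Ds t') < i" using sp(2)[of t' t "Max (Ds t')" i] fD[of t'] i t'(1) by auto
            then have "hi (Max (Ds t')) < lo i" using valid_mono[OF v] by blast
            then have "x \<noteq> n" using x nP unfolding P_def by auto
            then show "i \<in> Ds t \<inter> hit lo hi X'" using i x unfolding hit_def X'_def by auto
          next
            fix i assume "i \<in> Ds t \<inter> hit lo hi X'"
            then show "i \<in> Ds t \<inter> hit lo hi X" unfolding hit_def X'_def by auto
          qed
          have "w t < \<epsilon>/2" unfolding w_def hh using sel(3)[of t] nCh X'NB by blast
          then show ?thesis using ne by simp
        qed
      qed
    qed
    have "(\<Sum>t\<in>E. b t * w t) \<le> (\<Sum>t\<in>E. b t * (\<epsilon>/2 + (if t = t0 then 1 else 0)))"
      using wb unfolding b_def by (intro sum_mono mult_left_mono) auto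
    also have "\<dots> = (1/real K) * ((\<Sum>t\<in>E. \<epsilon>/2) + (\<Sum>t\<in>E. (if t = t0 then 1 else 0)))"
      unfolding b_def by (simp only: sum_distrib_left[symmetric] sum.distrib)
    also have "\<dots> \<le> (1/real K) * (real K * (\<epsilon>/2) + 1)"
    proof -
      have "(\<Sum>t\<in>E. \<epsilon>/2) = real K * (\<epsilon>/2)" unfolding E_def by simp
      moreover have "(\<Sum>t\<in>E. (if t = t0 then 1 else 0)) \<le> (1::real)" using fE by (simp add: sum.delta)
      ultimately show ?thesis using K by (intro mult_left_mono) auto
    qed
    also have "\<dots> = \<epsilon>/2 + 1 / real K" using K by (simp add: field_simps)
    also have "\<dots> < \<epsilon>" using K by simp
    finally show "sum (cmb b E A Ds) ((\<Union>j\<in>E. Ds j) \<inter> hit lo hi X) < \<epsilon>" unfolding eq .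
  qed
qed


lemma wf_RR:
  assumes cpt: "compact ((\<lambda>A. indicator A :: nat \<Rightarrow> real) ` M)" and fin: "\<forall>A\<in>M. finite A"
  shows "wf (RR M)"
  unfolding wf_iff_no_infinite_down_chain
proof
  assume "\<exists>f. \<forall>i. (f (Suc i), f i) \<in> RR M"
  then obtain f where f: "\<forall>i. (f (Suc i), f i) \<in> RR M" by blast
  have "\<forall>i. \<exists>n. f (Suc i) = insert n (f i) \<and> insert n (f i) \<in> NN M \<and> (\<forall>b\<in>f i. b < n)"
    using f unfolding RR_def by blast
  from choice[OF this] obtain nn where nn: "\<And>i. f (Suc i) = insert (nn i) (f i) \<and> insert (nn i) (f i) \<in> NN M \<and> (\<forall>b\<in>f i. b < nn i)"
    by blast
  have fm1: "f i \<subseteq> f (Suc i)" for i using nn[of i] by auto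
  have fmono: "i \<le> j \<Longrightarrow> f i \<subseteq> f j" for i j using lift_Suc_mono_le[of f, OF fm1] by blast
  have nnS: "nn i < nn (Suc i)" for i using nn[of i] nn[of "Suc i"] by auto
  then have smn: "strict_mono nn" by (rule strict_monoI_Suc)
  define U where "U = (\<Union>i. f i)"
  have "range nn \<subseteq> U" unfolding U_def using nn by blast
  moreover have "infinite (range nn)" using smn strict_mono_imp_inj_on[of nn UNIV] by (simp add: range_inj_infinite strict_mono_imp_inj_on)
  ultimately have infU: "infinite U" using finite_subset by blast
  have ex: "\<exists>p. p \<in> U \<and> p \<notin> F" if "F \<in> M" for F
  proof (rule ccontr)
    assume "\<not> ?thesis"
    then have "U \<subseteq> F" by blast
    then show False using infU fin that finite_subset by blast
  qed
  define p where "p F = (SOME p. p \<in> U \<and> p \<notin> F)" for F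
  have p: "p F \<in> U" "p F \<notin> F" if "F \<in> M" for F using someI_ex[OF ex[OF that]] unfolding p_def by auto
  let ?O = "\<lambda>F. {h :: nat \<Rightarrow> real. h (p F) < 1/2}"
  have op: "open (?O F)" for F
    by (rule open_Collect_less) (auto intro: continuous_on_product_coordinates)
  have cov: "(\<lambda>A. indicator A :: nat \<Rightarrow> real) ` M \<subseteq> (\<Union>F\<in>M. ?O F)"
  proof
    fix h assume "h \<in> (\<lambda>A. indicator A :: nat \<Rightarrow> real) ` M"
    then obtain F where F: "F \<in> M" "h = indicator F" by auto
    then have "h (p F) < 1/2" using p[OF F(1)] by simp
    then show "h \<in> (\<Union>F\<in>M. ?O F)" using F by blast
  qed
  obtain C' where C': "C' \<subseteq> M" "finite C'" "(\<lambda>A. indicator A :: nat \<Rightarrow> real) ` M \<subseteq> (\<Union>F\<in>C'. ?O F)"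
    using compactE_image[OF cpt, of M ?O] op cov by blast
  have "\<forall>F\<in>C'. \<exists>i. p F \<in> f i" using p C'(1) unfolding U_def by blast
  from bchoice[OF this] obtain phi where phi: "\<forall>F\<in>C'. p F \<in> f (phi F)" by blast
  define I where "I = Max (insert 0 (phi ` C'))"
  have inI: "p F \<in> f (Suc I)" if "F \<in> C'" for F
  proof -
    have "phi F \<le> I" unfolding I_def using C'(2) that by auto
    then have "phi F \<le> Suc I" by simp
    then show ?thesis using fmono phi that by blast
  qed
  have "f (Suc I) \<in> NN M" using nn[of I] by simp
  then obtain G where G: "G \<in> M" "f (Suc I) \<subseteq> G" unfolding NN_def by auto
  then have "indicator G \<in> (\<Union>F\<in>C'. ?O F)" using C'(3) by blast
  then obtain F where F: "F \<in> C'" "indicator G (p F) < (1/2::real)" by auto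
  then have "p F \<notin> G" by (auto simp: indicator_def split: if_splits)
  moreover have "p F \<in> G" using inI[OF F(1)] G by blast
  ultimately show False by simp
qed

lemma SM_NN:
  assumes cpt: "compact ((\<lambda>A. indicator A :: nat \<Rightarrow> real) ` M)" and fin: "\<forall>A\<in>M. finite A"
  shows "SM (NN M)"
proof -
  have "SM (NB M B)" for B
    using wf_RR[OF cpt fin]
  proof (induction B rule: wf_induct_rule)
    case (less B)
    then show ?case using SM_step[OF fin] by blast
  qed
  moreover have "NB M {} = NN M" unfolding NB_def by simp
  ultimately show ?thesis by metis
qed


definition pair :: "(nat \<Rightarrow> real) \<Rightarrow> (nat \<Rightarrow> real) \<Rightarrow> real" where
  "pair x y = (\<Sum>i\<in>{i. x i \<noteq> 0 \<and> y i \<noteq> 0}. x i * y i)"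

definition Tle :: "nat set set \<Rightarrow> (nat \<Rightarrow> real) \<Rightarrow> real \<Rightarrow> bool" where
  "Tle M h r \<longleftrightarrow> (\<forall>\<theta>\<in>Theta M. \<bar>pair \<theta> h\<bar> \<le> r)"

definition bvec :: "(nat \<Rightarrow> real) \<Rightarrow> nat set \<Rightarrow> (nat \<Rightarrow> nat \<Rightarrow> real) \<Rightarrow> nat \<Rightarrow> real" where
  "bvec a D v = (\<lambda>n. \<Sum>i\<in>D. a i * v i n)"

lemma pair_eq: "finite A \<Longrightarrow> {i. x i \<noteq> 0 \<and> y i \<noteq> 0} \<subseteq> A \<Longrightarrow> pair x y = (\<Sum>i\<in>A. x i * y i)"
  unfolding pair_def by (rule sum.mono_neutral_left) auto

lemma pair_c00_1: "x \<in> c00 \<Longrightarrow> pair x y = (\<Sum>i\<in>spt x. x i * y i)"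
  by (rule pair_eq) (auto simp: spt_def c00_def)

lemma pair_c00_2: "y \<in> c00 \<Longrightarrow> pair x y = (\<Sum>i\<in>spt y. x i * y i)"
  by (rule pair_eq) (auto simp: spt_def c00_def)

lemma pair_comm: "pair x y = pair y x"
  unfolding pair_def by (simp add: mult.commute conj_commute)

lemma pair_restr: "pair (restr E x) y = pair x (restr E y)"
  unfolding pair_def restr_def by (rule sum.cong) (auto simp: indicator_def)

lemma pair_unit: "pair (unitvec p) y = y p"
proof -
  have "pair (unitvec p) y = (\<Sum>i\<in>{p}. unitvec p i * y i)"
    by (rule pair_eq) (auto simp: unitvec_def indicator_def split: if_splits)
  then show ?thesis by (simp add: unitvec_def)
qed

lemma pair_zero2: "(\<forall>n. x n = 0 \<or> y n = 0) \<Longrightarrow> pair x y = 0"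
  unfolding pair_def by (rule sum.neutral) auto

lemma pair_lin1:
  assumes "x \<in> c00" "x' \<in> c00"
  shows "pair (\<lambda>n. a * x n + b * x' n) y = a * pair x y + b * pair x' y"
proof -
  let ?A = "spt x \<union> spt x'"
  have f: "finite ?A" using assms by (simp add: spt_fin)
  have "pair (\<lambda>n. a * x n + b * x' n) y = (\<Sum>i\<in>?A. (a * x i + b * x' i) * y i)"
    by (rule pair_eq[OF f]) (auto simp: spt_def)
  moreover have "pair x y = (\<Sum>i\<in>?A. x i * y i)" by (rule pair_eq[OF f]) (auto simp: spt_def)
  moreover have "pair x' y = (\<Sum>i\<in>?A. x' i * y i)" by (rule pair_eq[OF f]) (auto simp: spt_def)
  ultimately show ?thesis by (simp add: algebra_simps sum.distrib sum_distrib_left)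
qed

lemma pair_bvec:
  assumes "\<theta> \<in> c00" "finite D"
  shows "pair \<theta> (bvec a D v) = (\<Sum>i\<in>D. a i * pair \<theta> (v i))"
proof -
  have "pair \<theta> (bvec a D v) = (\<Sum>n\<in>spt \<theta>. \<theta> n * (\<Sum>i\<in>D. a i * v i n))" unfolding bvec_def using pair_c00_1[OF assms(1)] .
  also have "\<dots> = (\<Sum>n\<in>spt \<theta>. \<Sum>i\<in>D. a i * (\<theta> n * v i n))" by (simp add: sum_distrib_left algebra_simps)
  also have "\<dots> = (\<Sum>i\<in>D. \<Sum>n\<in>spt \<theta>. a i * (\<theta> n * v i n))" by (rule sum.swap)
  also have "\<dots> = (\<Sum>i\<in>D. a i * pair \<theta> (v i))" using pair_c00_1[OF assms(1)] by (simp add: sum_distrib_left)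
  finally show ?thesis .
qed

lemma Tle_unit: "Tle M h r \<Longrightarrow> \<bar>h p\<bar> \<le> r"
  unfolding Tle_def using Theta_props(3)[of p M] pair_unit by metis

lemma Tle_restr: "Tle M h r \<Longrightarrow> Tle M (restr E h) r"
  unfolding Tle_def using Theta_restr pair_restr by metis

lemma Tle_nonneg: "Tle M h r \<Longrightarrow> 0 \<le> r"
  unfolding Tle_def using Theta_zero[of M] by (metis abs_ge_zero order_trans)

lemma bvec_cmb:
  assumes "finite E" "\<forall>j\<in>E. finite (Ds j)"
  shows "bvec (cmb b E A Ds) (\<Union>j\<in>E. Ds j) v = bvec b E (\<lambda>j. bvec (A j) (Ds j) v)"
proof
  fix n
  let ?U = "\<Union>j\<in>E. Ds j"
  have fU: "finite ?U" using assms by auto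
  have "bvec (cmb b E A Ds) ?U v n = (\<Sum>i\<in>?U. \<Sum>j\<in>E. b j * (if i \<in> Ds j then A j i else 0) * v i n)"
    unfolding bvec_def cmb_def by (simp add: sum_distrib_right)
  also have "\<dots> = (\<Sum>j\<in>E. \<Sum>i\<in>?U. b j * (if i \<in> Ds j then A j i else 0) * v i n)" by (rule sum.swap)
  also have "\<dots> = (\<Sum>j\<in>E. b j * (\<Sum>i\<in>Ds j. A j i * v i n))"
  proof (rule sum.cong[OF refl])
    fix j assume j: "j \<in> E"
    have "(\<Sum>i\<in>?U. b j * (if i \<in> Ds j then A j i else 0) * v i n) = (\<Sum>i\<in>?U. b j * (if i \<in> Ds j then A j i * v i n else 0))"
      by (rule sum.cong) auto
    also have "\<dots> = b j * (\<Sum>i\<in>?U. (if i \<in> Ds j then A j i * v i n else 0))"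
      by (simp add: sum_distrib_left)
    also have "(\<Sum>i\<in>?U. (if i \<in> Ds j then A j i * v i n else 0)) = (\<Sum>i\<in>?U \<inter> Ds j. A j i * v i n)"
      using fU by (simp add: sum.inter_restrict)
    also have "?U \<inter> Ds j = Ds j" using j by auto
    finally show "(\<Sum>i\<in>?U. b j * (if i \<in> Ds j then A j i else 0) * v i n) = b j * (\<Sum>i\<in>Ds j. A j i * v i n)" .
  qed
  finally show "bvec (cmb b E A Ds) ?U v n = bvec b E (\<lambda>j. bvec (A j) (Ds j) v) n" unfolding bvec_def by simp
qed


lemma GB:
  assumes c: "cvx a D m" and th: "\<theta> \<in> c00" and R: "R \<ge> 0"
    and b: "\<forall>i\<in>D. \<bar>pair \<theta> (v i)\<bar> \<le> (if i \<in> H then R else R/2)"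
    and h: "sum a (D \<inter> H) \<le> 1/2"
  shows "\<bar>pair \<theta> (bvec a D v)\<bar> \<le> 3/4 * R"
proof -
  have fD: "finite D" and nn: "\<forall>i\<in>D. 0 \<le> a i" and s1: "sum a D = 1" using c unfolding cvx_def by auto
  have "\<bar>pair \<theta> (bvec a D v)\<bar> = \<bar>\<Sum>i\<in>D. a i * pair \<theta> (v i)\<bar>" using pair_bvec[OF th fD] by simp
  also have "\<dots> \<le> (\<Sum>i\<in>D. \<bar>a i * pair \<theta> (v i)\<bar>)" by (rule sum_abs)
  also have "\<dots> \<le> (\<Sum>i\<in>D. a i * (if i \<in> H then R else R/2))"
  proof (rule sum_mono)
    fix i assume i: "i \<in> D"
    show "\<bar>a i * pair \<theta> (v i)\<bar> \<le> a i * (if i \<in> H then R else R/2)"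
      using nn i b by (simp add: abs_mult mult_left_mono)
  qed
  also have "\<dots> = (\<Sum>i\<in>D. a i * (R/2) + (if i \<in> H then a i * (R/2) else 0))"
    by (rule sum.cong) auto
  also have "\<dots> = (\<Sum>i\<in>D. a i * (R/2)) + (\<Sum>i\<in>D. (if i \<in> H then a i * (R/2) else 0))"
    by (rule sum.distrib)
  also have "\<dots> = R/2 * sum a D + R/2 * sum a (D \<inter> H)"
  proof -
    have "(\<Sum>i\<in>D. a i * (R/2)) = R/2 * sum a D" by (simp add: sum_distrib_left mult.commute)
    moreover have "(\<Sum>i\<in>D. (if i \<in> H then a i * (R/2) else 0)) = (\<Sum>i\<in>D \<inter> H. a i * (R/2))"
      by (rule sum.inter_restrict[OF fD, symmetric])
    moreover have "(\<Sum>i\<in>D \<inter> H. a i * (R/2)) = R/2 * sum a (D \<inter> H)" by (simp add: sum_distrib_left mult.commute)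
    ultimately show ?thesis by simp
  qed
  also have "\<dots> \<le> R/2 * 1 + R/2 * (1/2)" using s1 h R by (intro add_mono mult_left_mono) auto
  finally show ?thesis by simp
qed

lemma adm_ms_mono:
  assumes "admissible M Es" "length ms = length Es" "\<forall>k<length Es. \<forall>j\<in>Es!k. ms!k \<le> j"
    "\<forall>k. Suc k < length Es \<longrightarrow> (\<forall>j\<in>Es!k. j < ms!Suc k)" "i \<le> j" "j < length Es"
  shows "ms!i \<le> ms!j"
  using assms(5,6)
proof (induction j)
  case 0 then show ?case by simp
next
  case (Suc j)
  show ?case
  proof (cases "i = Suc j")
    case True then show ?thesis by simp
  next
    case False
    then have "ms!i \<le> ms!j" using Suc by auto
    moreover obtain c where "c \<in> Es!j" using adm_ne[OF assms(1), of j] Suc.prems by auto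
    then have "ms!j \<le> c" "c < ms!Suc j" using assms(3,4) Suc.prems by auto
    ultimately show ?thesis by simp
  qed
qed

lemma at_most_one:
  assumes adm: "admissible M Es" and ms: "length ms = length Es" "\<forall>k<length Es. \<forall>j\<in>Es!k. ms!k \<le> j"
    "\<forall>k. Suc k < length Es \<longrightarrow> (\<forall>j\<in>Es!k. j < ms!Suc k)"
    and i: "i \<notin> hit lo hi (set ms)"
    and kk: "k < k'" "k' < length Es" and ab: "a \<in> Es!k" "b \<in> Es!k'" "lo i \<le> a" "a \<le> hi i" "lo i \<le> b" "b \<le> hi i"
  shows False
proof -
  have "a < ms!Suc k" using ms(3) kk ab by auto
  moreover have "ms!Suc k \<le> ms!k'" using adm_ms_mono[OF adm ms, of "Suc k" k'] kk by auto
  moreover have "ms!k' \<le> b" using ms(2) kk ab by auto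
  ultimately have "lo i \<le> ms!Suc k" "ms!Suc k \<le> hi i" using ab by auto
  moreover have "ms!Suc k \<in> set ms" using kk ms(1) by auto
  ultimately have "i \<in> hit lo hi (set ms)" unfolding hit_def by blast
  then show False using i by simp
qed

lemma singleton_NN:
  assumes M3: "\<forall>A :: nat set. card A = 3 \<longrightarrow> A \<in> M"
  shows "{p} \<in> NN M"
proof -
  have "{p, Suc p, Suc (Suc p)} \<in> M" using M3 by simp
  then show ?thesis unfolding NN_def by blast
qed

lemma avg:
  assumes M3: "\<forall>A :: nat set. card A = 3 \<longrightarrow> A \<in> M" and SMN: "SM (NN M)"
    and v: "valid lo hi" and vc: "\<forall>i. v i \<in> c00" and vs: "\<forall>i. spt (v i) \<subseteq> {lo i..hi i}"
    and vT: "\<forall>i. Tle M (v i) R"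
  shows "\<exists>a D. cvx a D m \<and> Tle M (bvec a D v) (3/4 * R)"
proof -
  have R: "R \<ge> 0" using Tle_nonneg vT by blast
  obtain a D where aD: "cvx a D m" "\<forall>A\<in>NN M. sum a (D \<inter> hit lo hi A) < 1/2"
    using SMN v unfolding SM_def by (meson zero_less_divide_1_iff zero_less_numeral)
  have vz: "v i n = 0" if "n < lo i \<or> hi i < n" for i n
    using vs that unfolding spt_def by fastforce
  have "\<bar>pair \<theta> (bvec a D v)\<bar> \<le> 3/4 * R" if th: "\<theta> \<in> Theta M" for \<theta>
    using th
  proof (induction \<theta> rule: Theta_induct)
    case (unit p)
    let ?H = "hit lo hi {p}"
    have "\<forall>i\<in>D. \<bar>pair (unitvec p) (v i)\<bar> \<le> (if i \<in> ?H then R else R/2)"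
    proof
      fix i assume "i \<in> D"
      show "\<bar>pair (unitvec p) (v i)\<bar> \<le> (if i \<in> ?H then R else R/2)"
      proof (cases "i \<in> ?H")
        case True then show ?thesis using Tle_unit[OF vT[rule_format, of i], of p] by (simp add: pair_unit)
      next
        case False
        then have "p < lo i \<or> hi i < p" unfolding hit_def by auto
        then show ?thesis using False vz R by (simp add: pair_unit)
      qed
    qed
    moreover have "sum a (D \<inter> ?H) \<le> 1/2" using aD(2) singleton_NN[OF M3] by (meson less_imp_le)
    ultimately show ?case using GB[OF aD(1) unitvec_c00 R] by blast
  next
    case (lin x y a' b')
    have "pair (\<lambda>n. a' * x n + b' * y n) (bvec a D v) = a' * pair x (bvec a D v) + b' * pair y (bvec a D v)"
      using pair_lin1 Theta_c00 lin by blast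
    then have "\<bar>pair (\<lambda>n. a' * x n + b' * y n) (bvec a D v)\<bar> \<le> \<bar>a'\<bar> * \<bar>pair x (bvec a D v)\<bar> + \<bar>b'\<bar> * \<bar>pair y (bvec a D v)\<bar>"
      by (simp add: abs_mult[symmetric] abs_triangle_ineq)
    also have "\<dots> \<le> \<bar>a'\<bar> * (3/4 * R) + \<bar>b'\<bar> * (3/4 * R)"
      using lin by (intro add_mono mult_left_mono) auto
    also have "\<dots> = (\<bar>a'\<bar> + \<bar>b'\<bar>) * (3/4 * R)" by (simp add: algebra_simps)
    also have "\<dots> \<le> 1 * (3/4 * R)" using lin R by (intro mult_right_mono) auto
    finally show ?case by simp
  next
    case (adm Es xs)
    let ?\<theta> = "\<lambda>n. (1/2) * (\<Sum>k<length Es. restr (Es!k) (xs!k) n)"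
    have thT: "?\<theta> \<in> Theta M" using Theta_adm adm by blast
    obtain F ms where F: "F \<in> M" "length ms = length Es" "set ms \<subseteq> F"
      "\<forall>k<length Es. \<forall>j\<in>Es!k. ms!k \<le> j" "\<forall>k. Suc k < length Es \<longrightarrow> (\<forall>j\<in>Es!k. j < ms!Suc k)"
      using adm(1) unfolding admissible_def by blast
    let ?H = "hit lo hi (set ms)"
    have HN: "set ms \<in> NN M" using F unfolding NN_def by blast
    have "\<forall>i\<in>D. \<bar>pair ?\<theta> (v i)\<bar> \<le> (if i \<in> ?H then R else R/2)"
    proof
      fix i assume "i \<in> D"
      show "\<bar>pair ?\<theta> (v i)\<bar> \<le> (if i \<in> ?H then R else R/2)"
      proof (cases "i \<in> ?H")
        case True then show ?thesis using vT thT unfolding Tle_def by simp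
      next
        case False
        let ?r = "\<lambda>k. restr (Es!k) (xs!k)"
        define Ks where "Ks = {k. k < length Es \<and> (\<exists>n\<in>Es!k. lo i \<le> n \<and> n \<le> hi i)}"
        have pe: "pair ?\<theta> (v i) = (1/2) * (\<Sum>k<length Es. pair (?r k) (v i))"
        proof -
          have "pair ?\<theta> (v i) = (\<Sum>n\<in>spt (v i). (1/2) * (\<Sum>k<length Es. ?r k n) * v i n)"
            using pair_c00_2[OF vc[rule_format, of i]] .
          also have "\<dots> = (1/2) * (\<Sum>k<length Es. \<Sum>n\<in>spt (v i). ?r k n * v i n)"
            by (simp add: sum_distrib_left sum_distrib_right sum.swap[of _ "spt (v i)"] mult.assoc)
          also have "\<dots> = (1/2) * (\<Sum>k<length Es. pair (?r k) (v i))"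
            using pair_c00_2[OF vc[rule_format, of i]] by simp
          finally show ?thesis .
        qed
        have z: "pair (?r k) (v i) = 0" if "k \<in> {..<length Es} - Ks" for k
        proof (rule pair_zero2, rule allI)
          fix n
          show "?r k n = 0 \<or> v i n = 0"
          proof (cases "n \<in> Es!k \<and> lo i \<le> n \<and> n \<le> hi i")
            case True then show ?thesis using that unfolding Ks_def by auto
          next
            case False
            then show ?thesis using vz[of n i] by (auto simp: restr_def)
          qed
        qed
        have KsL: "Ks \<subseteq> {..<length Es}" unfolding Ks_def by auto
        have "(\<Sum>k<length Es. pair (?r k) (v i)) = (\<Sum>k\<in>Ks. pair (?r k) (v i))"
        proof (rule sum.mono_neutral_right)
          show "finite {..<length Es}" by simp
          show "Ks \<subseteq> {..<length Es}" by (rule KsL)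
          show "\<forall>k\<in>{..<length Es} - Ks. pair (?r k) (v i) = 0" using z by blast
        qed
        moreover have cK: "card Ks \<le> 1"
        proof -
          have "\<forall>k\<in>Ks. \<forall>k'\<in>Ks. k = k'"
          proof (intro ballI, rule ccontr)
            fix k k' assume kk: "k \<in> Ks" "k' \<in> Ks" "k \<noteq> k'"
            obtain n where n: "n \<in> Es!k" "lo i \<le> n" "n \<le> hi i" "k < length Es" using kk unfolding Ks_def by auto
            obtain n' where n': "n' \<in> Es!k'" "lo i \<le> n'" "n' \<le> hi i" "k' < length Es" using kk unfolding Ks_def by auto
            show False
            proof (cases "k < k'")
              case True
              show False by (rule at_most_one[OF adm(1) F(2,4,5) False True n'(4) n(1) n'(1) n(2,3) n'(2,3)])
            next
              case False
              then have "k' < k" using kk by simp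
              show False by (rule at_most_one[OF adm(1) F(2,4,5) \<open>i \<notin> ?H\<close> \<open>k' < k\<close> n(4) n'(1) n(1) n'(2,3) n(2,3)])
            qed
          qed
          moreover have "finite Ks" using KsL finite_subset by blast
          ultimately show ?thesis by (simp add: card_le_Suc0_iff_eq)
        qed
        moreover have sK: "\<bar>\<Sum>k\<in>Ks. pair (?r k) (v i)\<bar> \<le> real (card Ks) * R"
        proof -
          have "\<bar>\<Sum>k\<in>Ks. pair (?r k) (v i)\<bar> \<le> (\<Sum>k\<in>Ks. \<bar>pair (?r k) (v i)\<bar>)" by (rule sum_abs)
          also have "\<dots> \<le> (\<Sum>k\<in>Ks. R)"
          proof (rule sum_mono)
            fix k assume "k \<in> Ks"
            then have "k < length xs" using adm(2) KsL by auto
            then have "xs!k \<in> set xs" by (rule nth_mem)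
            then have "xs!k \<in> Theta M" using adm(3) by (rule subsetD[rotated])
            then have "?r k \<in> Theta M" by (rule Theta_restr)
            then show "\<bar>pair (?r k) (v i)\<bar> \<le> R" using vT unfolding Tle_def by blast
          qed
          finally show ?thesis by simp
        qed
        moreover have "real (card Ks) * R \<le> R" using cK R by (simp add: mult_left_le_one_le)
        ultimately have "\<bar>\<Sum>k<length Es. pair (?r k) (v i)\<bar> \<le> R" by linarith
        then show ?thesis using False pe by (simp add: abs_mult)
      qed
    qed
    moreover have "sum a (D \<inter> ?H) \<le> 1/2" using aD(2) HN by (meson less_imp_le)
    ultimately show ?case using GB[OF aD(1) Theta_c00[OF thT] R] by blast
  qed
  then show ?thesis using aD(1) unfolding Tle_def by blast
qed


lemma bvec_c00: "finite D \<Longrightarrow> \<forall>i\<in>D. v i \<in> c00 \<Longrightarrow> bvec a D v \<in> c00"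
  unfolding bvec_def
  by (rule sum_c00[of D "\<lambda>i n. a i * v i n", simplified]) (auto intro: c00_lin[of _ _ _ 0, simplified])

lemma iter:
  assumes M3: "\<forall>A :: nat set. card A = 3 \<longrightarrow> A \<in> M" and SMN: "SM (NN M)"
    and v: "valid lo hi" and vc: "\<forall>i. v i \<in> c00" and vs: "\<forall>i. spt (v i) \<subseteq> {lo i..hi i}"
    and vT: "\<forall>i. Tle M (v i) R"
  shows "\<exists>a D. cvx a D m \<and> Tle M (bvec a D v) ((3/4)^k * R)"
proof (induction k arbitrary: m)
  case 0
  have "bvec (\<lambda>_. 1) {m} v = v m" unfolding bvec_def by simp
  then show ?case using cvx_point[of m] vT by (intro exI[of _ "\<lambda>_. 1"] exI[of _ "{m}"]) auto
next
  case (Suc k)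
  have ex: "\<forall>m. \<exists>a D. cvx a D m \<and> Tle M (bvec a D v) ((3/4)^k * R)" using Suc.IH by blast
  obtain A Ds ms where sel: "ms 0 = m" "\<And>j. cvx (A j) (Ds j) (ms j)"
    "\<And>j. Tle M (bvec (A j) (Ds j) v) ((3/4)^k * R)" "\<And>j. ms (Suc j) = Max (Ds j) + 1"
    by (rule select_seq[where mst = m and Q = "\<lambda>m a D. Tle M (bvec a D v) ((3/4)^k * R)", OF ex]) blast
  note sp = select_props[where A = A and Ds = Ds and ms = ms, OF sel(2) sel(4)]
  have fD: "finite (Ds j)" "Ds j \<noteq> {}" for j using sel(2)[of j] unfolding cvx_def by auto
  let ?lo = "\<lambda>j. lo (Min (Ds j))" and ?hi = "\<lambda>j. hi (Max (Ds j))"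
  have v': "valid ?lo ?hi" using valid_blocks[where Ds = Ds, OF v sp(3) sp(4)] .
  define w where "w j = bvec (A j) (Ds j) v" for j
  have wc: "\<forall>j. w j \<in> c00" unfolding w_def using bvec_c00 fD vc by blast
  have ws: "\<forall>j. spt (w j) \<subseteq> {?lo j..?hi j}"
  proof (intro allI subsetI)
    fix j n assume n: "n \<in> spt (w j)"
    have "\<exists>i\<in>Ds j. v i n \<noteq> 0"
    proof (rule ccontr)
      assume "\<not> ?thesis"
      then have "w j n = 0" unfolding w_def bvec_def by simp
      then show False using n unfolding spt_def by simp
    qed
    then obtain i where i: "i \<in> Ds j" "v i n \<noteq> 0" by blast
    then have "n \<in> {lo i..hi i}" using vs unfolding spt_def by blast
    moreover have "Min (Ds j) \<le> i" "i \<le> Max (Ds j)" using i fD by auto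
    ultimately show "n \<in> {?lo j..?hi j}" using valid_le[OF v] by (meson atLeastAtMost_iff order_trans)
  qed
  have wT: "\<forall>j. Tle M (w j) ((3/4)^k * R)" unfolding w_def using sel(3) by blast
  obtain b E where bE: "cvx b E 0" "Tle M (bvec b E w) (3/4 * ((3/4)^k * R))"
    using avg[OF M3 SMN v' wc ws wT] by blast
  have fE: "finite E" using bE unfolding cvx_def by auto
  have msm: "\<forall>j\<in>E. m \<le> ms j" using sp(1)[of 0] sel(1) by auto
  have cv: "cvx (cmb b E A Ds) (\<Union>j\<in>E. Ds j) m" using cmb_cvx[OF bE(1) _ msm] sel(2) by auto
  have "bvec (cmb b E A Ds) (\<Union>j\<in>E. Ds j) v = bvec b E w"
    unfolding w_def using bvec_cmb[OF fE] fD by blast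
  then show ?case using cv bE(2) by (intro exI[of _ "cmb b E A Ds"] exI[of _ "\<Union>j\<in>E. Ds j"]) (simp add: mult.assoc)
qed

lemma small_combo:
  assumes M3: "\<forall>A :: nat set. card A = 3 \<longrightarrow> A \<in> M" and SMN: "SM (NN M)"
    and v: "valid lo hi" and vc: "\<forall>i. v i \<in> c00" and vs: "\<forall>i. spt (v i) \<subseteq> {lo i..hi i}"
    and vT: "\<forall>i. Tle M (v i) R" and eta: "\<eta> > 0"
  shows "\<exists>a D. cvx a D m \<and> Tle M (bvec a D v) \<eta>"
proof -
  have R: "R \<ge> 0" using Tle_nonneg vT by blast
  obtain k where k: "(3/4::real)^k < \<eta> / (R + 1)" using real_arch_pow_inv[of "\<eta> / (R+1)" "3/4"] eta R by auto
  obtain a D where aD: "cvx a D m" "Tle M (bvec a D v) ((3/4)^k * R)" using iter[OF M3 SMN v vc vs vT] by blast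
  have "(3/4::real)^k * R \<le> (3/4)^k * (R + 1)" by simp
  also have "\<dots> < \<eta>" using k R by (simp add: field_simps)
  finally have "(3/4::real)^k * R \<le> \<eta>" by simp
  then have "Tle M (bvec a D v) \<eta>" using aD(2) unfolding Tle_def by force
  then show ?thesis using aD(1) by blast
qed


lemma normM_scale_eq:
  assumes x: "x \<in> c00"
  shows "normM M (\<lambda>n. c * x n) = \<bar>c\<bar> * normM M x"
proof (cases "c = 0")
  case True then show ?thesis using normM_zero by simp
next
  case False
  have cx: "(\<lambda>n. c * x n) \<in> c00" using c00_lin[OF x x, of c 0] by simp
  have "normM M (\<lambda>n. (1/c) * (c * x n)) \<le> \<bar>1/c\<bar> * normM M (\<lambda>n. c * x n)" by (rule normM_scale[OF cx])
  then have "normM M x \<le> \<bar>1/c\<bar> * normM M (\<lambda>n. c * x n)" using False by simp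
  then have "\<bar>c\<bar> * normM M x \<le> normM M (\<lambda>n. c * x n)" using False by (simp add: field_simps)
  then show ?thesis using normM_scale[OF x, of M c] by simp
qed

definition linon :: "(nat \<Rightarrow> real) set \<Rightarrow> ((nat \<Rightarrow> real) \<Rightarrow> real) \<Rightarrow> bool" where
  "linon V \<phi> \<longleftrightarrow> (\<forall>u\<in>V. \<forall>u'\<in>V. \<forall>a b. \<phi> (\<lambda>n. a * u n + b * u' n) = a * \<phi> u + b * \<phi> u')"

definition subsp :: "(nat \<Rightarrow> real) set \<Rightarrow> bool" where
  "subsp V \<longleftrightarrow> (\<forall>u\<in>V. \<forall>u'\<in>V. \<forall>a b. (\<lambda>n. a * u n + b * u' n) \<in> V) \<and> (\<lambda>n. 0) \<in> V \<and> V \<subseteq> c00"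

lemma linon_scale: "linon V \<phi> \<Longrightarrow> u \<in> V \<Longrightarrow> \<phi> (\<lambda>n. a * u n) = a * \<phi> u"
proof -
  assume l: "linon V \<phi>" and u: "u \<in> V"
  have "\<phi> (\<lambda>n. a * u n + 0 * u n) = a * \<phi> u + 0 * \<phi> u" using l u unfolding linon_def by blast
  then show ?thesis by simp
qed

lemma extend:
  assumes V: "subsp V" and e: "e \<in> c00" and lin: "linon V \<phi>" and dom: "\<forall>u\<in>V. \<phi> u \<le> normM M u"
  shows "\<exists>\<psi>. linon {(\<lambda>n. u n + s * e n) | u s. u \<in> V} \<psi> \<and>
            (\<forall>z\<in>{(\<lambda>n. u n + s * e n) | u s. u \<in> V}. \<psi> z \<le> normM M z) \<and> (\<forall>u\<in>V. \<psi> u = \<phi> u)"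
proof -
  let ?V' = "{(\<lambda>n. u n + s * e n) | u s. u \<in> V}"
  have cl: "u \<in> V \<Longrightarrow> u' \<in> V \<Longrightarrow> (\<lambda>n. a * u n + b * u' n) \<in> V" for u u' a b using V unfolding subsp_def by blast
  have V0: "(\<lambda>n. 0) \<in> V" and Vc: "V \<subseteq> c00" using V unfolding subsp_def by auto
  have sc: "u \<in> V \<Longrightarrow> (\<lambda>n. a * u n) \<in> V" for u a using cl[of u u a 0] by simp
  show ?thesis
  proof (cases "e \<in> V")
    case True
    have "?V' = V"
    proof (intro equalityI subsetI)
      fix z assume "z \<in> ?V'"
      then obtain u s where "u \<in> V" "z = (\<lambda>n. u n + s * e n)" by blast
      then show "z \<in> V" using cl[of u e 1 s] True by simp
    next
      fix z assume "z \<in> V"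
      moreover have "z = (\<lambda>n. z n + 0 * e n)" by simp
      ultimately show "z \<in> ?V'" by blast
    qed
    then show ?thesis using lin dom by auto
  next
    case False
    have uniq: "u \<in> V \<Longrightarrow> u' \<in> V \<Longrightarrow> (\<lambda>n. u n + s * e n) = (\<lambda>n. u' n + s' * e n) \<Longrightarrow> s = s' \<and> u = u'"
      for u u' s s'
    proof -
      assume u: "u \<in> V" "u' \<in> V" and eq: "(\<lambda>n. u n + s * e n) = (\<lambda>n. u' n + s' * e n)"
      have ss: "s = s'"
      proof (rule ccontr)
        assume ne: "s \<noteq> s'"
        have "e = (\<lambda>n. (1/(s - s')) * u' n + (- 1/(s - s')) * u n)"
        proof
          fix n
          have "u n + s * e n = u' n + s' * e n" using fun_cong[OF eq, of n] by simp
          then have "(s - s') * e n = u' n - u n" by (simp add: algebra_simps)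
          moreover have ne': "s - s' \<noteq> 0" using ne by simp
          ultimately have "e n = (u' n - u n) / (s - s')" by (simp add: eq_divide_eq mult.commute)
          also have "\<dots> = (1/(s - s')) * u' n + (- 1/(s - s')) * u n" by (simp add: diff_divide_distrib)
          finally show "e n = (1/(s - s')) * u' n + (- 1/(s - s')) * u n" .
        qed
        moreover have "(\<lambda>n. (1/(s - s')) * u' n + (- 1/(s - s')) * u n) \<in> V" by (rule cl[OF u(2) u(1)])
        ultimately have "e \<in> V" by simp
        then show False using False by simp
      qed
      moreover have "u = u'" using eq ss by (auto simp: fun_eq_iff)
      ultimately show ?thesis by simp
    qed
    define S where "S = {\<phi> w - normM M (\<lambda>n. w n - e n) | w. w \<in> V}"
    have key: "\<phi> w - normM M (\<lambda>n. w n - e n) \<le> normM M (\<lambda>n. w' n + e n) - \<phi> w'" if w: "w \<in> V" "w' \<in> V" for w w'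
    proof -
      have c1: "(\<lambda>n. w n - e n) \<in> c00" using c00_lin[of w e 1 "-1"] w Vc e by auto
      have c2: "(\<lambda>n. w' n + e n) \<in> c00" using c00_lin[of w' e 1 1] w Vc e by auto
      have "\<phi> (\<lambda>n. 1 * w n + 1 * w' n) = 1 * \<phi> w + 1 * \<phi> w'" using lin w unfolding linon_def by blast
      then have "\<phi> w + \<phi> w' = \<phi> (\<lambda>n. 1 * w n + 1 * w' n)" by simp
      also have "\<dots> \<le> normM M (\<lambda>n. 1 * w n + 1 * w' n)" using dom cl[OF w, of 1 1] by blast
      also have "(\<lambda>n. 1 * w n + 1 * w' n) = (\<lambda>n. (w n - e n) + (w' n + e n))" by auto
      also have "normM M \<dots> \<le> normM M (\<lambda>n. w n - e n) + normM M (\<lambda>n. w' n + e n)" using normM_triangle[OF c1 c2] .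
      finally show ?thesis by simp
    qed
    have Sne: "S \<noteq> {}" unfolding S_def using V0 by blast
    have Sbdd: "bdd_above S" unfolding S_def using key[OF _ V0] by (intro bdd_aboveI) blast
    define c where "c = Sup S"
    have cup: "\<phi> w - normM M (\<lambda>n. w n - e n) \<le> c" if "w \<in> V" for w
      unfolding c_def using that Sbdd by (intro cSup_upper) (auto simp: S_def)
    have clow: "c \<le> normM M (\<lambda>n. w' n + e n) - \<phi> w'" if "w' \<in> V" for w'
      unfolding c_def using Sne key[OF _ that] by (intro cSup_least) (auto simp: S_def)
    define dec where "dec z = (SOME p. fst p \<in> V \<and> z = (\<lambda>n. fst p n + snd p * e n))" for z
    have decI: "dec (\<lambda>n. u n + s * e n) = (u, s)" if "u \<in> V" for u s
    proof -
      let ?z = "\<lambda>n. u n + s * e n"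
      have "\<exists>p. fst p \<in> V \<and> ?z = (\<lambda>n. fst p n + snd p * e n)" using that by (intro exI[of _ "(u, s)"]) auto
      then have "fst (dec ?z) \<in> V \<and> ?z = (\<lambda>n. fst (dec ?z) n + snd (dec ?z) * e n)"
        unfolding dec_def by (rule someI_ex)
      then have "snd (dec ?z) = s \<and> fst (dec ?z) = u" using uniq[OF _ that] by metis
      then show ?thesis by (simp add: prod_eq_iff)
    qed
    define \<psi> where "\<psi> z = \<phi> (fst (dec z)) + snd (dec z) * c" for z
    have \<psi>I: "\<psi> (\<lambda>n. u n + s * e n) = \<phi> u + s * c" if "u \<in> V" for u s
      unfolding \<psi>_def using decI[OF that] by simp
    have L: "linon ?V' \<psi>" unfolding linon_def
    proof (intro ballI allI)
      fix z z' a b assume z: "z \<in> ?V'" "z' \<in> ?V'"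
      then obtain u s u' s' where us: "u \<in> V" "z = (\<lambda>n. u n + s * e n)" "u' \<in> V" "z' = (\<lambda>n. u' n + s' * e n)" by blast
      have "(\<lambda>n. a * z n + b * z' n) = (\<lambda>n. (a * u n + b * u' n) + (a * s + b * s') * e n)"
        using us by (auto simp: fun_eq_iff algebra_simps)
      then have "\<psi> (\<lambda>n. a * z n + b * z' n) = \<phi> (\<lambda>n. a * u n + b * u' n) + (a * s + b * s') * c"
        using \<psi>I cl[OF us(1) us(3)] by simp
      also have "\<dots> = a * (\<phi> u + s * c) + b * (\<phi> u' + s' * c)" using lin us unfolding linon_def by (simp add: algebra_simps)
      finally show "\<psi> (\<lambda>n. a * z n + b * z' n) = a * \<psi> z + b * \<psi> z'" using us \<psi>I by simp
    qed
    have D: "\<forall>z\<in>?V'. \<psi> z \<le> normM M z"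
    proof
      fix z assume "z \<in> ?V'"
      then obtain u s where us: "u \<in> V" "z = (\<lambda>n. u n + s * e n)" by blast
      have uc: "u \<in> c00" using us Vc by auto
      show "\<psi> z \<le> normM M z"
      proof (cases s "0::real" rule: linorder_cases)
        case equal
        then have "z = u" using us by auto
        then show ?thesis using us \<psi>I[OF us(1), of 0] dom equal by auto
      next
        case greater
        let ?w = "\<lambda>n. (1/s) * u n"
        have w: "?w \<in> V" using sc[OF us(1)] .
        have wc: "(\<lambda>n. ?w n + e n) \<in> c00" using c00_lin[of ?w e 1 1] w Vc e by auto
        have "c \<le> normM M (\<lambda>n. ?w n + e n) - \<phi> ?w" using clow[OF w] .
        then have "s * c \<le> s * normM M (\<lambda>n. ?w n + e n) - s * \<phi> ?w" using greater by (simp add: right_diff_distrib[symmetric])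
        also have "s * normM M (\<lambda>n. ?w n + e n) = normM M (\<lambda>n. s * (?w n + e n))"
          using normM_scale_eq[OF wc, of M s] greater by simp
        also have "(\<lambda>n. s * (?w n + e n)) = z" using us greater by (auto simp: fun_eq_iff field_simps)
        also have "s * \<phi> ?w = \<phi> u" using linon_scale[OF lin us(1), of "1/s"] greater by simp
        finally show ?thesis using \<psi>I[OF us(1), of s] us by simp
      next
        case less
        define t where "t = - s"
        have t: "t > 0" using less unfolding t_def by simp
        let ?w = "\<lambda>n. (1/t) * u n"
        have w: "?w \<in> V" using sc[OF us(1)] .
        have wc: "(\<lambda>n. ?w n - e n) \<in> c00" using c00_lin[of ?w e 1 "-1"] w Vc e by auto
        have "\<phi> ?w - normM M (\<lambda>n. ?w n - e n) \<le> c" using cup[OF w] .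
        then have "t * \<phi> ?w - t * normM M (\<lambda>n. ?w n - e n) \<le> t * c" using t
          by (simp add: right_diff_distrib[symmetric])
        also have "t * normM M (\<lambda>n. ?w n - e n) = normM M (\<lambda>n. t * (?w n - e n))"
          using normM_scale_eq[OF wc, of M t] t by simp
        also have "(\<lambda>n. t * (?w n - e n)) = z" using us t unfolding t_def by (auto simp: fun_eq_iff field_simps)
        also have "t * \<phi> ?w = \<phi> u" using linon_scale[OF lin us(1), of "1/t"] t by simp
        finally show ?thesis using \<psi>I[OF us(1), of s] us unfolding t_def by simp
      qed
    qed
    have E: "\<forall>u\<in>V. \<psi> u = \<phi> u" using \<psi>I[of _ 0] by simp
    show ?thesis using L D E by blast
  qed
qed


definition Sp :: "nat \<Rightarrow> (nat \<Rightarrow> real) set" where "Sp j = {z. \<forall>i. j \<le> i \<longrightarrow> z i = 0}"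
definition VV :: "(nat \<Rightarrow> real) \<Rightarrow> nat \<Rightarrow> (nat \<Rightarrow> real) set" where
  "VV x j = {(\<lambda>n. s * x n + w n) | s w. w \<in> Sp j}"

lemma Sp_c00: assumes "z \<in> Sp j" shows "z \<in> c00"
proof -
  have "{n. z n \<noteq> 0} \<subseteq> {..<j}" using assms unfolding Sp_def by (auto simp: not_less[symmetric])
  then show ?thesis unfolding c00_def using finite_subset by auto
qed

lemma VV_memI: "w \<in> Sp j \<Longrightarrow> z = (\<lambda>n. s * x n + w n) \<Longrightarrow> z \<in> VV x j"
  unfolding VV_def by blast

lemma VV_Suc_memI: "u \<in> VV x j \<Longrightarrow> z = (\<lambda>n. u n + s * unitvec j n) \<Longrightarrow> z \<in> {(\<lambda>n. u n + s * unitvec j n) | u s. u \<in> VV x j}"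
  by blast

lemma linonD: "linon V \<phi> \<Longrightarrow> u \<in> V \<Longrightarrow> u' \<in> V \<Longrightarrow> \<phi> (\<lambda>n. a * u n + b * u' n) = a * \<phi> u + b * \<phi> u'"
  unfolding linon_def by blast

lemma Sp_zero: "(\<lambda>n. 0) \<in> Sp j" unfolding Sp_def by simp

lemma Sp_lin: "z \<in> Sp j \<Longrightarrow> z' \<in> Sp j \<Longrightarrow> (\<lambda>n. a * z n + b * z' n) \<in> Sp j"
  unfolding Sp_def by auto

lemma VV_subsp: assumes x: "x \<in> c00" shows "subsp (VV x j)"
  unfolding subsp_def
proof (intro conjI ballI allI subsetI)
  fix u u' a b assume "u \<in> VV x j" "u' \<in> VV x j"
  then obtain s w s' w' where "w \<in> Sp j" "u = (\<lambda>n. s * x n + w n)" "w' \<in> Sp j" "u' = (\<lambda>n. s' * x n + w' n)"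
    unfolding VV_def by blast
  moreover then have "(\<lambda>n. a * u n + b * u' n) = (\<lambda>n. (a * s + b * s') * x n + (a * w n + b * w' n))"
    by (auto simp: fun_eq_iff algebra_simps)
  ultimately show "(\<lambda>n. a * u n + b * u' n) \<in> VV x j" using VV_memI[OF Sp_lin] by blast
next
  show "(\<lambda>n. 0) \<in> VV x j" by (rule VV_memI[OF Sp_zero, of _ 0]) simp
next
  fix u assume "u \<in> VV x j"
  then obtain s w where "w \<in> Sp j" "u = (\<lambda>n. s * x n + w n)" unfolding VV_def by blast
  then show "u \<in> c00" using c00_lin[OF x Sp_c00, of w j s 1] by simp
qed

lemma x_VV: "x \<in> VV x j"
  by (rule VV_memI[OF Sp_zero, of _ 1]) simp

lemma Sp_VV: "z \<in> Sp j \<Longrightarrow> z \<in> VV x j"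
  by (rule VV_memI[of z j _ 0]) auto

lemma VV_Suc: "VV x (Suc j) = {(\<lambda>n. u n + s * unitvec j n) | u s. u \<in> VV x j}"
proof (intro equalityI subsetI)
  fix z assume "z \<in> VV x (Suc j)"
  then obtain s w where w: "w \<in> Sp (Suc j)" "z = (\<lambda>n. s * x n + w n)" unfolding VV_def by blast
  define w' where "w' = (\<lambda>i. if i = j then 0 else w i)"
  have "w' \<in> Sp j" using w(1) unfolding Sp_def w'_def by (auto simp: le_Suc_eq)
  then have "(\<lambda>n. s * x n + w' n) \<in> VV x j" by (rule VV_memI) simp
  moreover have "z = (\<lambda>n. (s * x n + w' n) + w j * unitvec j n)"
    using w(2) unfolding w'_def unitvec_def by (auto simp: fun_eq_iff)
  ultimately show "z \<in> {(\<lambda>n. u n + s * unitvec j n) | u s. u \<in> VV x j}" by (rule VV_Suc_memI)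
next
  fix z assume "z \<in> {(\<lambda>n. u n + s * unitvec j n) | u s. u \<in> VV x j}"
  then obtain u t where u: "u \<in> VV x j" "z = (\<lambda>n. u n + t * unitvec j n)" by blast
  then obtain s w where w: "w \<in> Sp j" "u = (\<lambda>n. s * x n + w n)" unfolding VV_def by blast
  have "(\<lambda>n. w n + t * unitvec j n) \<in> Sp (Suc j)" using w(1) unfolding Sp_def unitvec_def by auto
  moreover have "z = (\<lambda>n. s * x n + (w n + t * unitvec j n))" using u w by auto
  ultimately show "z \<in> VV x (Suc j)" by (rule VV_memI)
qed

lemma HB_claim:
  assumes x: "x \<in> c00"
  shows "\<exists>\<phi>. linon (VV x j) \<phi> \<and> (\<forall>u\<in>VV x j. \<phi> u \<le> normM M u) \<and> \<phi> x = normM M x"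
proof (induction j)
  case 0
  have V0: "\<exists>s. u = (\<lambda>n. s * x n)" if u: "u \<in> VV x 0" for u
  proof -
    obtain s w where "w \<in> Sp 0" "u = (\<lambda>n. s * x n + w n)" using u unfolding VV_def by blast
    then have "u = (\<lambda>n. s * x n)" unfolding Sp_def by auto
    then show ?thesis by blast
  qed
  show ?case
  proof (cases "\<exists>n0. x n0 \<noteq> 0")
    case False
    then have xz: "x = (\<lambda>n. 0)" by auto
    have "linon (VV x 0) (\<lambda>_. 0)" unfolding linon_def by simp
    moreover have "\<forall>u\<in>VV x 0. (0::real) \<le> normM M u" using VV_subsp[OF x] normM_nonneg unfolding subsp_def by blast
    moreover have "(0::real) = normM M x" using xz normM_zero by simp
    ultimately show ?thesis by blast
  next
    case True
    then obtain n0 where n0: "x n0 \<noteq> 0" by auto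
    define \<phi> where "\<phi> u = u n0 / x n0 * normM M x" for u
    have "linon (VV x 0) \<phi>" unfolding linon_def \<phi>_def using n0 by (simp add: field_simps)
    moreover have "\<forall>u\<in>VV x 0. \<phi> u \<le> normM M u"
    proof
      fix u assume "u \<in> VV x 0"
      then obtain s where u: "u = (\<lambda>n. s * x n)" using V0 by blast
      have "\<phi> u = s * normM M x" unfolding \<phi>_def u using n0 by simp
      also have "\<dots> \<le> \<bar>s\<bar> * normM M x" using normM_nonneg[OF x, of M] by (intro mult_right_mono) auto
      also have "\<dots> = normM M u" unfolding u using normM_scale_eq[OF x] by simp
      finally show "\<phi> u \<le> normM M u" .
    qed
    moreover have "\<phi> x = normM M x" unfolding \<phi>_def using n0 by simp
    ultimately show ?thesis by blast
  qed
next
  case (Suc j)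
  then obtain \<phi> where \<phi>: "linon (VV x j) \<phi>" "\<forall>u\<in>VV x j. \<phi> u \<le> normM M u" "\<phi> x = normM M x" by blast
  obtain \<psi> where \<psi>: "linon {(\<lambda>n. u n + s * unitvec j n) | u s. u \<in> VV x j} \<psi>"
    "\<forall>z\<in>{(\<lambda>n. u n + s * unitvec j n) | u s. u \<in> VV x j}. \<psi> z \<le> normM M z" "\<forall>u\<in>VV x j. \<psi> u = \<phi> u"
    using extend[OF VV_subsp[OF x] unitvec_c00 \<phi>(1) \<phi>(2)] by blast
  have "\<psi> x = normM M x" using \<psi>(3) x_VV[of x j] \<phi>(3) by simp
  then show ?case unfolding VV_Suc using \<psi>(1,2) by blast
qed

lemma norming:
  assumes x: "x \<in> c00"
  shows "\<exists>h\<in>c00. Tle M h 1 \<and> pair h x = normM M x"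
proof -
  obtain K where K: "\<forall>i. K \<le> i \<longrightarrow> x i = 0"
  proof -
    have "finite {n. x n \<noteq> 0}" using x unfolding c00_def by simp
    then obtain K where "\<forall>n\<in>{n. x n \<noteq> 0}. n < K" using finite_nat_set_iff_bounded by blast
    then show ?thesis using that by (meson le_less_trans less_irrefl mem_Collect_eq)
  qed
  then have xS: "x \<in> Sp K" unfolding Sp_def by simp
  obtain \<phi> where \<phi>: "linon (VV x K) \<phi>" "\<forall>u\<in>VV x K. \<phi> u \<le> normM M u" "\<phi> x = normM M x"
    using HB_claim[OF x] by blast
  define h where "h i = (if i < K then \<phi> (unitvec i) else 0)" for i
  have "{n. h n \<noteq> 0} \<subseteq> {..<K}" by (auto simp: h_def split: if_splits)
  then have hc: "h \<in> c00" unfolding c00_def using finite_subset by auto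
  have uS: "unitvec i \<in> Sp K" if "i < K" for i using that unfolding Sp_def unitvec_def by auto
  have rep: "\<phi> z = pair h z" if z: "z \<in> Sp K" for z
  proof -
    have ps: "(\<lambda>n. \<Sum>i<j. z i * unitvec i n) \<in> Sp K" if "j \<le> K" for j
      using that unfolding Sp_def unitvec_def by (auto intro!: sum.neutral)
    have "j \<le> K \<Longrightarrow> \<phi> (\<lambda>n. \<Sum>i<j. z i * unitvec i n) = (\<Sum>i<j. z i * \<phi> (unitvec i))" for j
    proof (induction j)
      case 0
      have "\<phi> (\<lambda>n. 0) = \<phi> (\<lambda>n. 0 * x n + 0 * x n)" by simp
      also have "\<dots> = 0" using \<phi>(1) x_VV unfolding linon_def by (metis mult_zero_left add.right_neutral)
      finally show ?case by simp
    next
      case (Suc j)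
      have e: "(\<lambda>n. \<Sum>i<Suc j. z i * unitvec i n) = (\<lambda>n. 1 * (\<Sum>i<j. z i * unitvec i n) + z j * unitvec j n)" by simp
      have j1: "j \<le> K" "j < K" using Suc.prems by auto
      have "\<phi> (\<lambda>n. 1 * (\<Sum>i<j. z i * unitvec i n) + z j * unitvec j n) = 1 * \<phi> (\<lambda>n. \<Sum>i<j. z i * unitvec i n) + z j * \<phi> (unitvec j)"
        by (rule linonD[OF \<phi>(1) Sp_VV[OF ps[OF j1(1)], of x] Sp_VV[OF uS[OF j1(2)], of x]])
      then show ?case unfolding e using Suc by simp
    qed
    then have "\<phi> (\<lambda>n. \<Sum>i<K. z i * unitvec i n) = (\<Sum>i<K. z i * \<phi> (unitvec i))" by simp
    moreover have "(\<lambda>n. \<Sum>i<K. z i * unitvec i n) = z"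
    proof
      fix n
      show "(\<Sum>i<K. z i * unitvec i n) = z n"
      proof (cases "n < K")
        case True
        have "\<forall>i\<in>{..<K}-{n}. z i * unitvec i n = 0" by (auto simp: unitvec_def)
        then have "(\<Sum>i\<in>{..<K}-{n}. z i * unitvec i n) = 0" by (rule sum.neutral)
        moreover have "(\<Sum>i<K. z i * unitvec i n) = z n * unitvec n n + (\<Sum>i\<in>{..<K}-{n}. z i * unitvec i n)"
          using True by (subst sum.remove[of _ n]) auto
        ultimately show ?thesis by (simp add: unitvec_def)
      next
        case False
        then have "\<forall>i\<in>{..<K}. z i * unitvec i n = 0" by (auto simp: unitvec_def)
        then have "(\<Sum>i<K. z i * unitvec i n) = 0" by (rule sum.neutral)
        then show ?thesis using False z unfolding Sp_def by simp
      qed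
    qed
    moreover have "pair h z = (\<Sum>i<K. h i * z i)" by (rule pair_eq) (auto simp: h_def)
    ultimately show ?thesis unfolding h_def by (simp add: mult.commute)
  qed
  have "Tle M h 1" unfolding Tle_def
  proof
    fix \<theta> assume th: "\<theta> \<in> Theta M"
    let ?z = "restr {..<K} \<theta>"
    have zS: "?z \<in> Sp K" unfolding Sp_def restr_def by simp
    have zT: "?z \<in> Theta M" using Theta_restr[OF th] .
    have zc: "?z \<in> c00" using Theta_c00[OF zT] .
    have "pair \<theta> h = pair ?z h"
    proof -
      have "pair \<theta> h = (\<Sum>i<K. \<theta> i * h i)" by (rule pair_eq) (auto simp: h_def)
      moreover have "pair ?z h = (\<Sum>i<K. ?z i * h i)" by (rule pair_eq) (auto simp: h_def)
      ultimately show ?thesis by (simp add: restr_def)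
    qed
    also have "\<dots> = \<phi> ?z" using rep[OF zS] pair_comm by simp
    finally have pe: "pair \<theta> h = \<phi> ?z" .
    have "\<phi> ?z \<le> 1" using \<phi>(2) Sp_VV[OF zS] normM_Theta[OF zT] by fastforce
    moreover have "- \<phi> ?z \<le> 1"
    proof -
      have mz: "(\<lambda>n. (-1) * ?z n) \<in> Sp K" using Sp_lin[OF zS zS, of "-1" 0] by simp
      have "\<phi> (\<lambda>n. (-1) * ?z n) = - \<phi> ?z" using linon_scale[OF \<phi>(1) Sp_VV[OF zS], of "-1"] by simp
      moreover have "\<phi> (\<lambda>n. (-1) * ?z n) \<le> normM M (\<lambda>n. (-1) * ?z n)" using \<phi>(2) Sp_VV[OF mz] by blast
      moreover have "normM M (\<lambda>n. (-1) * ?z n) \<le> 1" using normM_scale_eq[OF zc, of M "-1"] normM_Theta[OF zT] by simp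
      ultimately show ?thesis by simp
    qed
    ultimately show "\<bar>pair \<theta> h\<bar> \<le> 1" using pe by simp
  qed
  moreover have "pair h x = normM M x" using rep[OF xS] \<phi>(3) by simp
  ultimately show ?thesis using hc by blast
qed


lemma dual_comb:
  assumes f: "f \<in> dual_space M" and g: "g \<in> dual_space M"
  shows "(\<lambda>x. a * f x + b * g x) \<in> dual_space M"
proof -
  obtain C1 where C1: "C1 \<ge> 0" "\<forall>x\<in>c00. \<bar>f x\<bar> \<le> C1 * normM M x" using dual_bound[OF f] by blast
  obtain C2 where C2: "C2 \<ge> 0" "\<forall>x\<in>c00. \<bar>g x\<bar> \<le> C2 * normM M x" using dual_bound[OF g] by blast
  have L: "\<forall>x\<in>c00. \<forall>y\<in>c00. \<forall>c d. (a * f (\<lambda>n. c * x n + d * y n) + b * g (\<lambda>n. c * x n + d * y n))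
            = c * (a * f x + b * g x) + d * (a * f y + b * g y)"
    using dual_lin[OF f] dual_lin[OF g] by (simp add: algebra_simps)
  have B: "\<forall>x\<in>c00. \<bar>a * f x + b * g x\<bar> \<le> (\<bar>a\<bar> * C1 + \<bar>b\<bar> * C2) * normM M x"
  proof
    fix x assume x: "x \<in> c00"
    have "\<bar>a * f x + b * g x\<bar> \<le> \<bar>a\<bar> * \<bar>f x\<bar> + \<bar>b\<bar> * \<bar>g x\<bar>" by (simp add: abs_mult[symmetric] abs_triangle_ineq)
    also have "\<dots> \<le> \<bar>a\<bar> * (C1 * normM M x) + \<bar>b\<bar> * (C2 * normM M x)"
      using C1 C2 x by (intro add_mono mult_left_mono) auto
    finally show "\<bar>a * f x + b * g x\<bar> \<le> (\<bar>a\<bar> * C1 + \<bar>b\<bar> * C2) * normM M x" by (simp add: algebra_simps)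
  qed
  have Z: "\<forall>x. x \<notin> c00 \<longrightarrow> a * f x + b * g x = 0" using dual_out[OF f] dual_out[OF g] by simp
  show ?thesis unfolding dual_space_def using L B Z by blast
qed

definition estar :: "nat \<Rightarrow> (nat \<Rightarrow> real) \<Rightarrow> real" where
  "estar i = (\<lambda>x. if x \<in> c00 then x i else 0)"

lemma estar_dual: "estar i \<in> dual_space M"
proof -
  have L: "\<forall>x\<in>c00. \<forall>y\<in>c00. \<forall>a b. estar i (\<lambda>n. a * x n + b * y n) = a * estar i x + b * estar i y"
    unfolding estar_def using c00_lin by auto
  have B: "\<forall>x\<in>c00. \<bar>estar i x\<bar> \<le> 1 * normM M x" unfolding estar_def using normM_sup by simp
  have Z: "\<forall>x. x \<notin> c00 \<longrightarrow> estar i x = 0" unfolding estar_def by simp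
  show ?thesis unfolding dual_space_def using L B Z by blast
qed

definition hfun :: "(nat \<Rightarrow> real) \<Rightarrow> (nat \<Rightarrow> real) \<Rightarrow> real" where
  "hfun h = (\<lambda>x. if x \<in> c00 then pair h x else 0)"

lemma Tle_bound:
  assumes T: "Tle M h r" and x: "x \<in> c00"
  shows "\<bar>pair h x\<bar> \<le> r * normM M x"
proof (rule field_le_epsilon)
  fix e :: real assume e: "e > 0"
  have r: "r \<ge> 0" using Tle_nonneg[OF T] .
  define t where "t = normM M x + e / (r + 1)"
  have er: "e / (r + 1) > 0" using e r by simp
  have t: "t > 0" "normM M x < t" unfolding t_def using normM_nonneg[OF x, of M] er by auto
  have xt: "(\<lambda>n. (1/t) * x n) \<in> Theta M" using normM_lt[OF x t(2)] by (simp add: divide_inverse mult.commute)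
  have "pair (\<lambda>n. (1/t) * x n + 0 * x n) h = (1/t) * pair x h + 0 * pair x h" by (rule pair_lin1[OF x x])
  then have "pair (\<lambda>n. (1/t) * x n) h = pair x h / t" by simp
  moreover have "\<bar>pair (\<lambda>n. (1/t) * x n) h\<bar> \<le> r" using T xt unfolding Tle_def by blast
  ultimately have "\<bar>pair x h / t\<bar> \<le> r" by simp
  then have "\<bar>pair x h\<bar> \<le> r * t" using t by (simp add: abs_divide abs_of_pos pos_divide_le_eq)
  also have "r * t = r * normM M x + r * (e / (r + 1))" unfolding t_def by (simp add: algebra_simps)
  also have "r * (e / (r + 1)) \<le> e" using r e by (simp add: field_simps)
  finally show "\<bar>pair h x\<bar> \<le> r * normM M x + e" using pair_comm by simp
qed

lemma hfun_dual:
  assumes T: "Tle M h r"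
  shows "hfun h \<in> dual_space M" "dual_norm M (hfun h) \<le> r"
proof -
  have L: "\<forall>x\<in>c00. \<forall>y\<in>c00. \<forall>a b. hfun h (\<lambda>n. a * x n + b * y n) = a * hfun h x + b * hfun h y"
  proof (intro ballI allI)
    fix x y a b assume xy: "x \<in> c00" "y \<in> c00"
    have "pair h (\<lambda>n. a * x n + b * y n) = pair (\<lambda>n. a * x n + b * y n) h" by (rule pair_comm)
    also have "\<dots> = a * pair x h + b * pair y h" by (rule pair_lin1[OF xy])
    also have "\<dots> = a * pair h x + b * pair h y" by (simp add: pair_comm)
    finally show "hfun h (\<lambda>n. a * x n + b * y n) = a * hfun h x + b * hfun h y"
      unfolding hfun_def using xy c00_lin[OF xy] by simp
  qed
  have B: "\<forall>x\<in>c00. \<bar>hfun h x\<bar> \<le> r * normM M x" unfolding hfun_def using Tle_bound[OF T] by simp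
  have Z: "\<forall>x. x \<notin> c00 \<longrightarrow> hfun h x = 0" unfolding hfun_def by simp
  show "hfun h \<in> dual_space M" unfolding dual_space_def using L B Z by blast
  show "dual_norm M (hfun h) \<le> r"
  proof (rule dual_norm_le)
    fix x assume "x \<in> c00" "normM M x \<le> 1"
    then have "\<bar>hfun h x\<bar> \<le> r * normM M x" using B by blast
    also have "\<dots> \<le> r * 1" using Tle_nonneg[OF T] \<open>normM M x \<le> 1\<close> by (intro mult_left_mono) auto
    finally show "\<bar>hfun h x\<bar> \<le> r" by simp
  qed
qed


lemma Phi_sum:
  assumes lin: "\<forall>f\<in>dual_space M. \<forall>g\<in>dual_space M. \<forall>a b. \<Phi> (\<lambda>x. a * f x + b * g x) = a * \<Phi> f + b * \<Phi> g"
  shows "(\<lambda>x. \<Sum>i<L. c i * estar i x) \<in> dual_space M \<and> \<Phi> (\<lambda>x. \<Sum>i<L. c i * estar i x) = (\<Sum>i<L. c i * \<Phi> (estar i))"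
proof (induction L)
  case 0
  have e: "(\<lambda>x. \<Sum>i<0. c i * estar i x) = (\<lambda>x. 0 * estar 0 x + 0 * estar 0 x)" by simp
  have "(\<lambda>x. 0 * estar 0 x + 0 * estar 0 x) \<in> dual_space M" by (rule dual_comb[OF estar_dual estar_dual])
  moreover have "\<Phi> (\<lambda>x. 0 * estar 0 x + 0 * estar 0 x) = 0 * \<Phi> (estar 0) + 0 * \<Phi> (estar 0)"
    using lin estar_dual by blast
  ultimately show ?case unfolding e by simp
next
  case (Suc L)
  let ?G = "\<lambda>x. \<Sum>i<L. c i * estar i x"
  have e: "(\<lambda>x. \<Sum>i<Suc L. c i * estar i x) = (\<lambda>x. 1 * ?G x + c L * estar L x)" by simp
  have "(\<lambda>x. 1 * ?G x + c L * estar L x) \<in> dual_space M" using dual_comb[OF _ estar_dual] Suc by blast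
  moreover have "\<Phi> (\<lambda>x. 1 * ?G x + c L * estar L x) = 1 * \<Phi> ?G + c L * \<Phi> (estar L)"
    by (rule lin[rule_format]) (use Suc.IH estar_dual in auto)
  ultimately show ?case unfolding e using Suc by simp
qed

lemma hfun_sum:
  assumes "spt h \<subseteq> {..<L}"
  shows "hfun h = (\<lambda>x. \<Sum>i<L. h i * estar i x)"
proof
  fix x
  show "hfun h x = (\<Sum>i<L. h i * estar i x)"
  proof (cases "x \<in> c00")
    case True
    have "pair h x = (\<Sum>i<L. h i * x i)" by (rule pair_eq) (use assms in \<open>auto simp: spt_def\<close>)
    then show ?thesis using True unfolding hfun_def estar_def by simp
  next
    case False then show ?thesis unfolding hfun_def estar_def by simp
  qed
qed

theorem reflexive_thm:
  assumes cpt: "compact ((\<lambda>A. indicator A :: nat \<Rightarrow> real) ` M)"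
    and M3: "\<forall>A :: nat set. card A = 3 \<longrightarrow> A \<in> M" and fin: "\<forall>A\<in>M. finite A"
  shows "reflexive_space M"
  unfolding reflexive_space_def
proof (intro allI impI)
  fix \<Phi> :: "((nat \<Rightarrow> real) \<Rightarrow> real) \<Rightarrow> real"
  assume lin: "\<forall>f\<in>dual_space M. \<forall>g\<in>dual_space M. \<forall>a b. \<Phi> (\<lambda>x. a * f x + b * g x) = a * \<Phi> f + b * \<Phi> g"
    and bnd: "\<exists>C. \<forall>f\<in>dual_space M. \<bar>\<Phi> f\<bar> \<le> C * dual_norm M f"
  have SMN: "SM (NN M)" using SM_NN[OF cpt fin] .
  obtain C0 where C0: "\<forall>f\<in>dual_space M. \<bar>\<Phi> f\<bar> \<le> C0 * dual_norm M f" using bnd by blast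
  define C where "C = max C0 0"
  have C: "C \<ge> 0" "\<forall>f\<in>dual_space M. \<bar>\<Phi> f\<bar> \<le> C * dual_norm M f"
  proof -
    show "C \<ge> 0" unfolding C_def by simp
    show "\<forall>f\<in>dual_space M. \<bar>\<Phi> f\<bar> \<le> C * dual_norm M f"
    proof
      fix f assume f: "f \<in> dual_space M"
      have "C0 * dual_norm M f \<le> C * dual_norm M f" unfolding C_def using dual_norm_nonneg[OF f] by (intro mult_right_mono) auto
      then show "\<bar>\<Phi> f\<bar> \<le> C * dual_norm M f" using C0 f by force
    qed
  qed
  define a where "a i = \<Phi> (estar i)" for i
  define y where "y k = (\<lambda>n. if n < k then a n else (0::real))" for k
  have yc: "y k \<in> c00" for k
  proof -
    have "{n. y k n \<noteq> 0} \<subseteq> {..<k}" unfolding y_def by auto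
    then show ?thesis unfolding c00_def using finite_subset by auto
  qed
  have Phi_h: "\<Phi> (hfun h) = (\<Sum>i<L. h i * a i)" if "spt h \<subseteq> {..<L}" for h L
    using Phi_sum[OF lin, where L = L and c = h] hfun_sum[OF that] unfolding a_def by simp
  have pair_y: "pair h (y k) = (\<Sum>i<L. h i * a i)" if "spt h \<subseteq> {..<L}" "L \<le> k" for h L k
  proof -
    have "pair h (y k) = (\<Sum>i<L. h i * y k i)" by (rule pair_eq) (use that in \<open>auto simp: spt_def\<close>)
    then show ?thesis unfolding y_def using that(2) by simp
  qed
  have ybound: "normM M (y k) \<le> C" for k
  proof -
    obtain h where h: "h \<in> c00" "Tle M h 1" "pair h (y k) = normM M (y k)" using norming[OF yc[of k]] by blast
    let ?h = "restr {..<k} h"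
    have T: "Tle M ?h 1" using Tle_restr[OF h(2)] .
    have sp: "spt ?h \<subseteq> {..<k}" unfolding spt_def restr_def by (auto split: split_indicator_asm)
    have "pair ?h (y k) = pair h (restr {..<k} (y k))" using pair_restr by simp
    also have "restr {..<k} (y k) = y k" unfolding restr_def y_def by auto
    finally have "normM M (y k) = pair ?h (y k)" using h(3) by simp
    also have "\<dots> = \<Phi> (hfun ?h)" using pair_y[OF sp] Phi_h[OF sp] by simp
    also have "\<dots> \<le> C * dual_norm M (hfun ?h)" using C hfun_dual[OF T] by fastforce
    also have "\<dots> \<le> C * 1" using hfun_dual[OF T] C by (intro mult_left_mono) auto
    finally show ?thesis by simp
  qed
  show "\<exists>y. (\<forall>k. y k \<in> c00) \<and>
           (\<forall>\<epsilon>>0. \<exists>K. \<forall>m\<ge>K. \<forall>n\<ge>K. normM M (\<lambda>i. y m i - y n i) < \<epsilon>) \<and>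
           (\<forall>f\<in>dual_space M. (\<lambda>k. f (y k)) \<longlonglongrightarrow> \<Phi> f)"
  proof (intro exI[of _ y] conjI)
    show "\<forall>k. y k \<in> c00" using yc by blast
    show "\<forall>\<epsilon>>0. \<exists>K. \<forall>m\<ge>K. \<forall>n\<ge>K. normM M (\<lambda>i. y m i - y n i) < \<epsilon>"
    proof (rule ccontr)
      assume "\<not> (\<forall>\<epsilon>>0. \<exists>K. \<forall>m\<ge>K. \<forall>n\<ge>K. normM M (\<lambda>i. y m i - y n i) < \<epsilon>)"
      then obtain \<delta> where \<delta>: "\<delta> > 0" "\<forall>K. \<exists>m\<ge>K. \<exists>n\<ge>K. \<delta> \<le> normM M (\<lambda>i. y m i - y n i)"
        by (auto simp: not_less)
      define Z where "Z m n = (\<lambda>i. if m \<le> i \<and> i < n then a i else (0::real))" for m n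
      have Zc: "Z m n \<in> c00" for m n
      proof -
        have "{i. Z m n i \<noteq> 0} \<subseteq> {..<n}" unfolding Z_def by auto
        then show ?thesis unfolding c00_def using finite_subset by auto
      qed
      have ex: "\<exists>p. K \<le> fst p \<and> fst p < snd p \<and> \<delta> \<le> normM M (Z (fst p) (snd p))" for K
      proof -
        obtain m n where mn: "m \<ge> K" "n \<ge> K" "\<delta> \<le> normM M (\<lambda>i. y m i - y n i)" using \<delta>(2) by blast
        show ?thesis
        proof (cases m n rule: linorder_cases)
          case less
          have "(\<lambda>i. y m i - y n i) = (\<lambda>i. - Z m n i)" unfolding y_def Z_def using less by (auto simp: fun_eq_iff)
          then have "normM M (\<lambda>i. y m i - y n i) = normM M (Z m n)" using normM_neg[OF Zc] by simp
          then show ?thesis using mn less by (intro exI[of _ "(m, n)"]) auto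
        next
          case equal
          then have "(\<lambda>i. y m i - y n i) = (\<lambda>i. 0)" by simp
          then show ?thesis using mn \<delta>(1) normM_zero by simp
        next
          case greater
          have "(\<lambda>i. y m i - y n i) = Z n m" unfolding y_def Z_def using greater by (auto simp: fun_eq_iff)
          then show ?thesis using mn greater by (intro exI[of _ "(n, m)"]) auto
        qed
      qed
      have "\<forall>K. \<exists>p. K \<le> fst p \<and> fst p < snd p \<and> \<delta> \<le> normM M (Z (fst p) (snd p))" using ex by blast
      from choice[OF this] obtain g where g: "\<And>K. K \<le> fst (g K) \<and> fst (g K) < snd (g K) \<and> \<delta> \<le> normM M (Z (fst (g K)) (snd (g K)))"
        by blast
      define lo where "lo = rec_nat 0 (\<lambda>j l. snd (g l))"
      have loS: "lo (Suc j) = snd (g (lo j))" for j unfolding lo_def by simp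
      define mm where "mm j = fst (g (lo j))" for j
      define nn where "nn j = snd (g (lo j))" for j
      have mn: "mm j < nn j" "nn j \<le> mm (Suc j)" "\<delta> \<le> normM M (Z (mm j) (nn j))" for j
        using g[of "lo j"] g[of "lo (Suc j)"] unfolding mm_def nn_def loS by auto
      have v0: "valid mm (\<lambda>j. nn j - 1)" unfolding valid_def
      proof
        fix i
        have "mm i < nn i" "nn i \<le> mm (Suc i)" using mn by auto
        then show "mm i \<le> nn i - 1 \<and> nn i - 1 < mm (Suc i)" by linarith
      qed
      have "\<forall>j. \<exists>h. h \<in> c00 \<and> Tle M h 1 \<and> pair h (Z (mm j) (nn j)) = normM M (Z (mm j) (nn j))"
        using norming[OF Zc] by blast
      from choice[OF this] obtain hh where hh: "\<And>j. hh j \<in> c00 \<and> Tle M (hh j) 1 \<and> pair (hh j) (Z (mm j) (nn j)) = normM M (Z (mm j) (nn j))"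
        by blast
      define v where "v j = restr {mm j..<nn j} (hh j)" for j
      have vc: "\<forall>j. v j \<in> c00" unfolding v_def using hh restr_c00 by blast
      have vs: "\<forall>j. spt (v j) \<subseteq> {mm j..nn j - 1}"
        unfolding v_def spt_def restr_def by (auto split: split_indicator_asm)
      have vT: "\<forall>j. Tle M (v j) 1" unfolding v_def using hh Tle_restr by blast
      have rZ: "restr {mm j..<nn j} (Z (mm j) (nn j)) = Z (mm j) (nn j)" for j
        unfolding restr_def Z_def by (auto simp: fun_eq_iff)
      have vz: "pair (v j) (Z (mm j) (nn j)) \<ge> \<delta>" for j
        using hh[of j] mn(3)[of j] pair_restr[of "{mm j..<nn j}" "hh j" "Z (mm j) (nn j)"] rZ[of j] unfolding v_def by simp
      define \<eta> where "\<eta> = \<delta> / (2 * (C + 1))"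
      have eta: "\<eta> > 0" unfolding \<eta>_def using \<delta> C by simp
      obtain cc D where cD: "cvx cc D 0" "Tle M (bvec cc D v) \<eta>"
        using small_combo[OF M3 SMN v0 vc vs vT eta] by blast
      have fD: "finite D" "D \<noteq> {}" and cnn: "\<forall>j\<in>D. 0 \<le> cc j" and c1: "sum cc D = 1" using cD(1) unfolding cvx_def by auto
      define L where "L = Max (nn ` D)"
      have nL: "j \<in> D \<Longrightarrow> nn j \<le> L" for j unfolding L_def using fD by simp
      let ?g = "bvec cc D v"
      have gsp: "spt ?g \<subseteq> {..<L}"
      proof
        fix i assume "i \<in> spt ?g"
        then have "\<exists>j\<in>D. v j i \<noteq> 0" unfolding spt_def bvec_def by (auto intro: ccontr simp: sum.neutral)
        then obtain j where j: "j \<in> D" "v j i \<noteq> 0" by blast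
        then have "i < nn j" using vs mn(1)[of j] unfolding spt_def by fastforce
        then show "i \<in> {..<L}" using nL[OF j(1)] by simp
      qed
      have yz: "pair (v j) (y L) = pair (v j) (Z (mm j) (nn j))" if j: "j \<in> D" for j
      proof -
        have "restr {mm j..<nn j} (y L) = Z (mm j) (nn j)"
          unfolding restr_def y_def Z_def using nL[OF j] by (auto simp: fun_eq_iff)
        then have "pair (restr {mm j..<nn j} (hh j)) (y L) = pair (hh j) (Z (mm j) (nn j))" by (simp add: pair_restr)
        moreover have "pair (restr {mm j..<nn j} (hh j)) (Z (mm j) (nn j)) = pair (hh j) (Z (mm j) (nn j))"
          using rZ[of j] by (simp add: pair_restr)
        ultimately show ?thesis unfolding v_def by simp
      qed
      have "pair ?g (y L) = pair (y L) ?g" by (rule pair_comm)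
      also have "\<dots> = (\<Sum>j\<in>D. cc j * pair (y L) (v j))" using pair_bvec[OF yc fD(1)] .
      also have "\<dots> = (\<Sum>j\<in>D. cc j * pair (v j) (Z (mm j) (nn j)))" using yz by (simp add: pair_comm)
      also have "\<dots> \<ge> (\<Sum>j\<in>D. cc j * \<delta>)" using vz cnn by (intro sum_mono mult_left_mono) auto
      finally have ge: "pair ?g (y L) \<ge> \<delta>" using c1 by (simp add: sum_distrib_right[symmetric])
      have "pair ?g (y L) = \<Phi> (hfun ?g)" using pair_y[OF gsp order.refl] Phi_h[OF gsp] by simp
      also have "\<dots> \<le> C * dual_norm M (hfun ?g)" using C hfun_dual[OF cD(2)] by fastforce
      also have "\<dots> \<le> C * \<eta>" using hfun_dual[OF cD(2)] C by (intro mult_left_mono) auto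
      also have "\<dots> < \<delta>"
      proof -
        have "C * \<eta> \<le> (C + 1) * \<eta>" using eta by simp
        moreover have "(C + 1) * \<eta> = \<delta> / 2"
        proof -
          have "C + 1 \<noteq> 0" using C by simp
          then show ?thesis unfolding \<eta>_def by (simp add: field_simps)
        qed
        ultimately show ?thesis using \<delta> by simp
      qed
      finally show False using ge by simp
    qed
    show "\<forall>f\<in>dual_space M. (\<lambda>k. f (y k)) \<longlonglongrightarrow> \<Phi> f"
    proof
      fix f assume f: "f \<in> dual_space M"
      show "(\<lambda>k. f (y k)) \<longlonglongrightarrow> \<Phi> f"
      proof (rule LIMSEQ_I)
        fix r :: real assume r: "r > 0"
        define e' where "e' = r / (2 * C + 1)"
        have e': "e' > 0" unfolding e'_def using r C by simp
        obtain N c where Nc: "dual_norm M (\<lambda>x. if x \<in> c00 then f x - (\<Sum>i<N. c i * x i) else 0) < e'"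
          using shrinking_basis_thm[OF M3] f e' unfolding shrinking_basis_def shrinking_def by blast
        define rf where "rf = (\<lambda>x. if x \<in> c00 then f x - (\<Sum>i<N. c i * x i) else 0)"
        define G where "G = (\<lambda>x. \<Sum>i<N. c i * estar i x)"
        have G: "G \<in> dual_space M" "\<Phi> G = (\<Sum>i<N. c i * a i)"
          using Phi_sum[OF lin, where L = N and c = c] unfolding G_def a_def by auto
        have rfeq: "rf = (\<lambda>x. 1 * f x + (-1) * G x)"
        proof
          fix x show "rf x = 1 * f x + (-1) * G x"
          proof (cases "x \<in> c00")
            case True then show ?thesis unfolding rf_def G_def estar_def by simp
          next
            case False then show ?thesis unfolding rf_def G_def estar_def using dual_out[OF f] by simp
          qed
        qed
        have rfd: "rf \<in> dual_space M" unfolding rfeq by (rule dual_comb[OF f G(1)])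
        have feq: "f = (\<lambda>x. 1 * rf x + 1 * G x)" unfolding rfeq by simp
        have Pf: "\<Phi> f = \<Phi> rf + \<Phi> G"
        proof -
          have "\<Phi> (\<lambda>x. 1 * rf x + 1 * G x) = 1 * \<Phi> rf + 1 * \<Phi> G" by (rule lin[rule_format, OF rfd G(1)])
          then show ?thesis using feq by simp
        qed
        have DN: "dual_norm M rf < e'" using Nc unfolding rf_def .
        have DN0: "0 \<le> dual_norm M rf" using dual_norm_nonneg[OF rfd] .
        show "\<exists>no. \<forall>n\<ge>no. norm (f (y n) - \<Phi> f) < r"
        proof (intro exI allI impI)
          fix k assume k: "N \<le> k"
          have "rf (y k) = f (y k) - (\<Sum>i<N. c i * y k i)" unfolding rf_def using yc by simp
          moreover have "(\<Sum>i<N. c i * y k i) = (\<Sum>i<N. c i * a i)" unfolding y_def using k by simp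
          ultimately have "f (y k) - \<Phi> f = rf (y k) - \<Phi> rf" using Pf G(2) by simp
          then have "norm (f (y k) - \<Phi> f) \<le> \<bar>rf (y k)\<bar> + \<bar>\<Phi> rf\<bar>" by simp
          also have "\<bar>rf (y k)\<bar> \<le> dual_norm M rf * C"
          proof -
            have "\<bar>rf (y k)\<bar> \<le> dual_norm M rf * normM M (y k)" using dual_norm_bound[OF rfd yc] .
            also have "\<dots> \<le> dual_norm M rf * C" using ybound DN0 by (intro mult_left_mono) auto
            finally show ?thesis .
          qed
          also have "\<bar>\<Phi> rf\<bar> \<le> C * dual_norm M rf" using C rfd by blast
          also have "dual_norm M rf * C + C * dual_norm M rf = 2 * C * dual_norm M rf" by simp
          also have "\<dots> \<le> 2 * C * e'" using DN C by (intro mult_left_mono) auto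
          also have "\<dots> < r" unfolding e'_def using r C by (simp add: field_simps)
          finally show "norm (f (y k) - \<Phi> f) < r" by simp
        qed
      qed
    qed
  qed
qed



theorem lemma3p7:
  fixes M :: "nat set set"
  assumes "compact ((\<lambda>A. indicator A :: nat \<Rightarrow> real) ` M)"
    and "\<forall>A :: nat set. card A = 3 \<longrightarrow> A \<in> M"
  shows "shrinking_basis M \<and> ((\<forall>A\<in>M. finite A) \<longrightarrow> reflexive_space M)"
  using shrinking_basis_thm[OF assms(2)] reflexive_thm[OF assms(1) assms(2)] by blast

end
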